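(* In the calculus $\mathcal{L}$ described in the context, reduction preserves typing of commands: for every type $A$ and commands $c_1,c_2$, if $c_1:A$ and $c_1\rightsquigarrow c_2$, then $c_2:A$. The same holds in the ordered fragment, i.e. when all judgements $\vdash_p$ (for expressions, stacks and commands) are required to be derived without the rule (struct).
   Context: Polarities are $\varepsilon\in\{+,-\}$. Types: positive $P,Q ::= R \mid 1 \mid A\otimes B \mid A\oplus B$; negative $N,M ::= A\multimap B \mid A\,\&\,B$; $\varpi(P)=+$, $\varpi(N)=-$ ($R$ is an atomic type of resources). Fix variables and resource constants $r_n$ ($n\in\mathbb N$). Expressions $t,u$ and values $v,w$: $t,u ::= v \mid (\mathrm{let}\ x^+=t\ \mathrm{in}\ u)^+ \mid (\mathrm{let}\ x^-=v\ \mathrm{in}\ u)^+ \mid \delta(v,(x,y).t)^+ \mid \delta(v,().t)^+ \mid \delta(v,x.t,y.u)^+ \mid (v\,w)^+ \mid (\pi_1 v)^+ \mid (\pi_2 v)^+$; $v,w ::= (\mathrm{let}\ x^+=t\ \mathrm{in}\ v)^- \mid (\mathrm{let}\ x^-=v\ \mathrm{in}\ w)^- \mid \delta(v,(x,y).w)^- \mid \delta(v,().w)^- \mid \delta(v,x.w,y.w')^- \mid (v\,w)^- \mid (\pi_1 v)^- \mid (\pi_2 v)^- \mid x \mid \mathrm{new} \mid \mathrm{delete} \mid (v,w) \mid () \mid \iota_1 v \mid \iota_2 v \mid \lambda x.t \mid \langle t,u\rangle \mid r_n$. $t[v/x]$ is capture-avoiding substitution. Contexts are finite lists of typed variables. Typing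 rules ($v,w$ range over values): (var) $x:A\vdash x:A$. (struct) from $\Gamma\vdash t:A$ and a type-preserving bijection $\sigma$ from entries of $\Gamma$ to entries of $\Gamma'$ (permutation plus renaming) derive $\Gamma'\vdash t[\sigma]:A$. $\vdash\mathrm{new}:1\multimap(R\oplus 1)$; $\vdash\mathrm{delete}:R\multimap 1$. (let) from $\Delta\vdash t:A$, $\Gamma,x:A\vdash u:B$ derive $\Gamma,\Delta\vdash(\mathrm{let}\ x^{\varpi(A)}=t\ \mathrm{in}\ u)^{\varpi(B)}:B$. From $\Gamma\vdash v:A$, $\Delta\vdash w:B$ derive $\Gamma,\Delta\vdash(v,w):A\otimes B$; from $\Delta\vdash v:A\otimes B$, $\Gamma,x:A,y:B,\Gamma'\vdash t:C$ derive $\Gamma,\Delta,\Gamma'\vdash\delta(v,(x,y).t)^{\varpi(C)}:C$. $\vdash():1$; from $\Delta\vdash v:1$, $\Gamma,\Gamma'\vdash t:A$ derive $\Gamma,\Delta,\Gamma'\vdash\delta(v,().t)^{\varpi(A)}:A$. From $\Gamma\vdash v:A$ derive $\Gamma\vdash\iota_1v:A\oplus B$; from $\Gamma\vdash v:B$ derive $\Gamma\vdash\iota_2v:A\oplus B$; from $\Delta\vdash v:A\oplus B$, $\Gamma,x:A,\Gamma'\vdash t:C$, $\Gamma,y:B,\Gamma'\vdash u:C$ derive $\Gamma,\Delta,\Gamma'\vdash\delta(v,x.t,y.u)^{\varpi(C)}:C$. From $x:A,\Gamma\vdash t:B$ derive $\Gamma\vdash\lambda x.t:A\multimap B$; from $\Gamma\vdash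 w:A$, $\Delta\vdash v:A\multimap B$ derive $\Gamma,\Delta\vdash(v\,w)^{\varpi(B)}:B$. From $\Gamma\vdash t:A$, $\Gamma\vdash u:B$ derive $\Gamma\vdash\langle t,u\rangle:A\&B$; from $\Gamma\vdash v:A_1\&A_2$ derive $\Gamma\vdash(\pi_iv)^{\varpi(A_i)}:A_i$. $\vdash_p$ is generated by these rules plus the axioms $\vdash_p r_n:R$. Machine: stacks $s ::= \star \mid v^\varepsilon\cdot s \mid \pi_i^\varepsilon\cdot s \mid (x^+.u)^\varepsilon\cdot s$; lists $l ::= []\mid r_n::l$; commands $\langle t\mid s\mid l\rangle^\varepsilon$. Stack typing $s:A\vdash_p C$: $\star:A\vdash_p A$; if $s:B\vdash_p C$, $\varepsilon=\varpi(B)$ and $\vdash_p v:A$ then $v^\varepsilon\cdot s:A\multimap B\vdash_p C$; if $s:B\vdash_p C$, $\varepsilon=\varpi(B)$ and $x:A\vdash_p t:B$ then $(x^+.t)^\varepsilon\cdot s:A\vdash_p C$; if $s:A_i\vdash_p C$ and $\varepsilon=\varpi(A_i)$ then $\pi_i^\varepsilon\cdot s:A_1\&A_2\vdash_p C$. A command is typed, $\langle t\mid s\mid l\rangle^\varepsilon:A$, iff there is $B$ with $\varpi(B)=\varepsilon$, $\vdash_p t:B$ and $s:B\vdash_p A$. Reduction $\rightsquigarrow$ ($i\in\{1,2\}$): $\langle(\mathrm{let}\ x^-=v\ \mathrm{in}\ t)^\varepsilon\mid s\mid l\rangle^\varepsilon\rightsquigarrow\langle t[v/x]\mid s\mid l\rangle^\varepsilon$;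 $\langle(\mathrm{let}\ x^+=t\ \mathrm{in}\ u)^\varepsilon\mid s\mid l\rangle^\varepsilon\rightsquigarrow\langle t\mid (x^+.u)^\varepsilon\cdot s\mid l\rangle^+$; $\langle v\mid (x^+.t)^\varepsilon\cdot s\mid l\rangle^+\rightsquigarrow\langle t[v/x]\mid s\mid l\rangle^\varepsilon$; $\langle (v\,w)^\varepsilon\mid s\mid l\rangle^\varepsilon\rightsquigarrow\langle v\mid w^\varepsilon\cdot s\mid l\rangle^-$; $\langle \lambda x.t\mid v^\varepsilon\cdot s\mid l\rangle^-\rightsquigarrow\langle t[v/x]\mid s\mid l\rangle^\varepsilon$; $\langle (\pi_i v)^\varepsilon\mid s\mid l\rangle^\varepsilon\rightsquigarrow\langle v\mid \pi_i^\varepsilon\cdot s\mid l\rangle^-$; $\langle \langle t_1,t_2\rangle\mid \pi_i^\varepsilon\cdot s\mid l\rangle^-\rightsquigarrow\langle t_i\mid s\mid l\rangle^\varepsilon$; $\langle \delta((v,w),(x,y).t)^\varepsilon\mid s\mid l\rangle^\varepsilon\rightsquigarrow\langle t[v/x,w/y]\mid s\mid l\rangle^\varepsilon$; $\langle \delta((),().t)^\varepsilon\mid s\mid l\rangle^\varepsilon\rightsquigarrow\langle t\mid s\mid l\rangle^\varepsilon$; $\langle \delta(\iota_i v,x_1.t_1,x_2.t_2)^\varepsilon\mid s\mid l\rangle^\varepsilon\rightsquigarrow\langle t_i[v/x_i]\mid s\mid l\rangle^\varepsilon$; $\langle \mathrm{new}\mid ()^{\varepsilon}\cdot s\mid r_n::l\rangle^-\rightsquigarrow\langle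 \iota_1 r_n\mid s\mid l\rangle^+$; $\langle \mathrm{new}\mid ()^{\varepsilon}\cdot s\mid []\rangle^-\rightsquigarrow\langle \iota_2 ()\mid s\mid []\rangle^+$; $\langle \mathrm{delete}\mid r_n^{\varepsilon}\cdot s\mid l\rangle^-\rightsquigarrow\langle ()\mid s\mid r_n::l\rangle^+$. *)

theory Defs
  imports "HOL-Library.Multiset"
begin

datatype pol = Pos | Neg

datatype ty =
    TR
  | TOne
  | TTensor ty ty
  | TPlus ty ty
  | TLolli ty ty
  | TWith ty ty

fun varpi :: "ty \<Rightarrow> pol" where
  "varpi TR = Pos"
| "varpi TOne = Pos"
| "varpi (TTensor _ _) = Pos"
| "varpi (TPlus _ _) = Pos"
| "varpi (TLolli _ _) = Neg"
| "varpi (TWith _ _) = Neg"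

section \<open>Raw syntax (expressions and values share one raw datatype)\<close>

type_synonym var = nat

datatype tm =
    Var var
  | New
  | Delete
  | Res nat                       (* resource constant r_n *)
  | Unit
  | Pair tm tm
  | Inj1 tm
  | Inj2 tm
  | Lam var tm
  | Wth tm tm
  | Let pol pol var tm tm         (* Let px e x t u  =  (let x^px = t in u)^e, x bound in u *)
  | DTens pol tm var var tm       (* DTens e v x y t = delta(v,(x,y).t)^e *)
  | DOne pol tm tm                (* DOne e v t = delta(v,().t)^e *)
  | DSum pol tm var tm var tm     (* DSum e v x t y u = delta(v,x.t,y.u)^e *)
  | App pol tm tm
  | Prj1 pol tm
  | Prj2 pol tm

inductive isval :: "tm \<Rightarrow> bool" and isexp :: "tm \<Rightarrow> bool" where
  ex_val: "isval v \<Longrightarrow> isexp v"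
| ex_letp: "isexp t \<Longrightarrow> isexp u \<Longrightarrow> isexp (Let Pos Pos x t u)"
| ex_letn: "isval v \<Longrightarrow> isexp u \<Longrightarrow> isexp (Let Neg Pos x v u)"
| ex_dtens: "isval v \<Longrightarrow> isexp t \<Longrightarrow> isexp (DTens Pos v x y t)"
| ex_done: "isval v \<Longrightarrow> isexp t \<Longrightarrow> isexp (DOne Pos v t)"
| ex_dsum: "isval v \<Longrightarrow> isexp t \<Longrightarrow> isexp u \<Longrightarrow> isexp (DSum Pos v x t y u)"
| ex_app: "isval v \<Longrightarrow> isval w \<Longrightarrow> isexp (App Pos v w)"
| ex_prj1: "isval v \<Longrightarrow> isexp (Prj1 Pos v)"
| ex_prj2: "isval v \<Longrightarrow> isexp (Prj2 Pos v)"
| va_letp: "isexp t \<Longrightarrow> isval v \<Longrightarrow> isval (Let Pos Neg x t v)"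
| va_letn: "isval v \<Longrightarrow> isval w \<Longrightarrow> isval (Let Neg Neg x v w)"
| va_dtens: "isval v \<Longrightarrow> isval w \<Longrightarrow> isval (DTens Neg v x y w)"
| va_done: "isval v \<Longrightarrow> isval w \<Longrightarrow> isval (DOne Neg v w)"
| va_dsum: "isval v \<Longrightarrow> isval w \<Longrightarrow> isval w' \<Longrightarrow> isval (DSum Neg v x w y w')"
| va_app: "isval v \<Longrightarrow> isval w \<Longrightarrow> isval (App Neg v w)"
| va_prj1: "isval v \<Longrightarrow> isval (Prj1 Neg v)"
| va_prj2: "isval v \<Longrightarrow> isval (Prj2 Neg v)"
| va_var: "isval (Var x)"
| va_new: "isval New"
| va_delete: "isval Delete"
| va_pair: "isval v \<Longrightarrow> isval w \<Longrightarrow> isval (Pair v w)"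
| va_unit: "isval Unit"
| va_inj1: "isval v \<Longrightarrow> isval (Inj1 v)"
| va_inj2: "isval v \<Longrightarrow> isval (Inj2 v)"
| va_lam: "isexp t \<Longrightarrow> isval (Lam x t)"
| va_wth: "isexp t \<Longrightarrow> isexp u \<Longrightarrow> isval (Wth t u)"
| va_res: "isval (Res n)"

primrec fv :: "tm \<Rightarrow> var set" where
  "fv (Var x) = {x}"
| "fv New = {}"
| "fv Delete = {}"
| "fv (Res n) = {}"
| "fv Unit = {}"
| "fv (Pair a b) = fv a \<union> fv b"
| "fv (Inj1 a) = fv a"
| "fv (Inj2 a) = fv a"
| "fv (Lam x t) = fv t - {x}"
| "fv (Wth a b) = fv a \<union> fv b"
| "fv (Let p e x t u) = fv t \<union> (fv u - {x})"
| "fv (DTens e v x y t) = fv v \<union> (fv t - {x, y})"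
| "fv (DOne e v t) = fv v \<union> fv t"
| "fv (DSum e v x t y u) = fv v \<union> (fv t - {x}) \<union> (fv u - {y})"
| "fv (App e a b) = fv a \<union> fv b"
| "fv (Prj1 e a) = fv a"
| "fv (Prj2 e a) = fv a"

primrec vars :: "tm \<Rightarrow> var set" where
  "vars (Var x) = {x}"
| "vars New = {}"
| "vars Delete = {}"
| "vars (Res n) = {}"
| "vars Unit = {}"
| "vars (Pair a b) = vars a \<union> vars b"
| "vars (Inj1 a) = vars a"
| "vars (Inj2 a) = vars a"
| "vars (Lam x t) = insert x (vars t)"
| "vars (Wth a b) = vars a \<union> vars b"
| "vars (Let p e x t u) = insert x (vars t \<union> vars u)"
| "vars (DTens e v x y t) = {x, y} \<union> vars v \<union> vars t"
| "vars (DOne e v t) = vars v \<union> vars t"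
| "vars (DSum e v x t y u) = {x, y} \<union> vars v \<union> vars t \<union> vars u"
| "vars (App e a b) = vars a \<union> vars b"
| "vars (Prj1 e a) = vars a"
| "vars (Prj2 e a) = vars a"

definition sw :: "var \<Rightarrow> var \<Rightarrow> var \<Rightarrow> var" where
  "sw a b z = (if z = a then b else if z = b then a else z)"

primrec swap :: "var \<Rightarrow> var \<Rightarrow> tm \<Rightarrow> tm" where
  "swap a b (Var x) = Var (sw a b x)"
| "swap a b New = New"
| "swap a b Delete = Delete"
| "swap a b (Res n) = Res n"
| "swap a b Unit = Unit"
| "swap a b (Pair s t) = Pair (swap a b s) (swap a b t)"
| "swap a b (Inj1 s) = Inj1 (swap a b s)"
| "swap a b (Inj2 s) = Inj2 (swap a b s)"
| "swap a b (Lam x t) = Lam (sw a b x) (swap a b t)"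
| "swap a b (Wth s t) = Wth (swap a b s) (swap a b t)"
| "swap a b (Let p e x t u) = Let p e (sw a b x) (swap a b t) (swap a b u)"
| "swap a b (DTens e v x y t) = DTens e (swap a b v) (sw a b x) (sw a b y) (swap a b t)"
| "swap a b (DOne e v t) = DOne e (swap a b v) (swap a b t)"
| "swap a b (DSum e v x t y u) =
     DSum e (swap a b v) (sw a b x) (swap a b t) (sw a b y) (swap a b u)"
| "swap a b (App e s t) = App e (swap a b s) (swap a b t)"
| "swap a b (Prj1 e s) = Prj1 e (swap a b s)"
| "swap a b (Prj2 e s) = Prj2 e (swap a b s)"

lemma size_swap[simp]: "size (swap a b t) = size t"
  by (induction t) auto

definition fresh :: "var set \<Rightarrow> var" where
  "fresh S = Suc (Max (insert 0 S))"

definition img :: "(var \<Rightarrow> tm) \<Rightarrow> var set \<Rightarrow> var set" where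
  "img \<sigma> S = (\<Union>z\<in>S. fv (\<sigma> z))"

definition ren1 :: "(var \<Rightarrow> tm) \<Rightarrow> var \<Rightarrow> tm \<Rightarrow> var \<times> tm" where
  "ren1 \<sigma> x t =
     (let S = img \<sigma> (fv t - {x}) in
      if x \<notin> S then (x, t)
      else (let x' = fresh (S \<union> vars t \<union> {x}) in (x', swap x x' t)))"

definition ren2 :: "(var \<Rightarrow> tm) \<Rightarrow> var \<Rightarrow> var \<Rightarrow> tm \<Rightarrow> var \<times> var \<times> tm" where
  "ren2 \<sigma> x y t =
     (let S = img \<sigma> (fv t - {x, y}) in
      if x \<notin> S \<and> y \<notin> S then (x, y, t)
      else (let x' = fresh (S \<union> vars t \<union> {x, y});
                y' = fresh (S \<union> vars t \<union> {x, y, x'})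
            in (x', y', swap y y' (swap x x' t))))"

lemma size_ren1[simp]: "size (snd (ren1 \<sigma> x t)) = size t"
  by (simp add: ren1_def Let_def)

lemma size_ren2[simp]: "size (snd (snd (ren2 \<sigma> x y t))) = size t"
  by (simp add: ren2_def Let_def)

function psubst :: "(var \<Rightarrow> tm) \<Rightarrow> tm \<Rightarrow> tm" where
  "psubst \<sigma> (Var x) = \<sigma> x"
| "psubst \<sigma> New = New"
| "psubst \<sigma> Delete = Delete"
| "psubst \<sigma> (Res n) = Res n"
| "psubst \<sigma> Unit = Unit"
| "psubst \<sigma> (Pair a b) = Pair (psubst \<sigma> a) (psubst \<sigma> b)"
| "psubst \<sigma> (Inj1 a) = Inj1 (psubst \<sigma> a)"
| "psubst \<sigma> (Inj2 a) = Inj2 (psubst \<sigma> a)"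
| "psubst \<sigma> (Lam x t) =
     (let r = ren1 \<sigma> x t in Lam (fst r) (psubst (\<sigma>(fst r := Var (fst r))) (snd r)))"
| "psubst \<sigma> (Wth a b) = Wth (psubst \<sigma> a) (psubst \<sigma> b)"
| "psubst \<sigma> (Let p e x t u) =
     (let r = ren1 \<sigma> x u in
      Let p e (fst r) (psubst \<sigma> t) (psubst (\<sigma>(fst r := Var (fst r))) (snd r)))"
| "psubst \<sigma> (DTens e v x y t) =
     (let r = ren2 \<sigma> x y t in
      DTens e (psubst \<sigma> v) (fst r) (fst (snd r))
        (psubst (\<sigma>(fst r := Var (fst r), fst (snd r) := Var (fst (snd r)))) (snd (snd r))))"
| "psubst \<sigma> (DOne e v t) = DOne e (psubst \<sigma> v) (psubst \<sigma> t)"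
| "psubst \<sigma> (DSum e v x t y u) =
     (let r = ren1 \<sigma> x t; q = ren1 \<sigma> y u in
      DSum e (psubst \<sigma> v)
        (fst r) (psubst (\<sigma>(fst r := Var (fst r))) (snd r))
        (fst q) (psubst (\<sigma>(fst q := Var (fst q))) (snd q)))"
| "psubst \<sigma> (App e a b) = App e (psubst \<sigma> a) (psubst \<sigma> b)"
| "psubst \<sigma> (Prj1 e a) = Prj1 e (psubst \<sigma> a)"
| "psubst \<sigma> (Prj2 e a) = Prj2 e (psubst \<sigma> a)"
  by pat_completeness auto
termination
  by (relation "measure (\<lambda>(\<sigma>, t). size t)") auto

definition subst1 :: "tm \<Rightarrow> var \<Rightarrow> tm \<Rightarrow> tm" where
  "subst1 v x t = psubst (Var(x := v)) t"

definition subst2 :: "tm \<Rightarrow> var \<Rightarrow> tm \<Rightarrow> var \<Rightarrow> tm \<Rightarrow> tm" where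
  "subst2 v x w y t = psubst (Var(x := v, y := w)) t"

type_synonym ctx = "(var \<times> ty) list"

text \<open>The flag st says whether the rule (struct) is available (st = True: full system;
  st = False: ordered fragment).\<close>

inductive ptyp :: "bool \<Rightarrow> ctx \<Rightarrow> tm \<Rightarrow> ty \<Rightarrow> bool" where
  t_var: "ptyp st [(x, A)] (Var x) A"
| t_struct: "st \<Longrightarrow> ptyp st \<Gamma> t A \<Longrightarrow> distinct (map fst \<Gamma>') \<Longrightarrow>
    mset \<Gamma>' = mset (map (\<lambda>(x, B). (f x, B)) \<Gamma>) \<Longrightarrow>
    ptyp st \<Gamma>' (psubst (\<lambda>z. if z \<in> fst ` set \<Gamma> then Var (f z) else Var z) t) A"
| t_new: "ptyp st [] New (TLolli TOne (TPlus TR TOne))"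
| t_delete: "ptyp st [] Delete (TLolli TR TOne)"
| t_res: "ptyp st [] (Res n) TR"
| t_let: "ptyp st \<Delta> t A \<Longrightarrow> ptyp st (\<Gamma> @ [(x, A)]) u B \<Longrightarrow> distinct (map fst (\<Gamma> @ \<Delta>)) \<Longrightarrow>
    ptyp st (\<Gamma> @ \<Delta>) (Let (varpi A) (varpi B) x t u) B"
| t_pair: "isval v \<Longrightarrow> isval w \<Longrightarrow> ptyp st \<Gamma> v A \<Longrightarrow> ptyp st \<Delta> w B \<Longrightarrow>
    distinct (map fst (\<Gamma> @ \<Delta>)) \<Longrightarrow> ptyp st (\<Gamma> @ \<Delta>) (Pair v w) (TTensor A B)"
| t_dtens: "isval v \<Longrightarrow> ptyp st \<Delta> v (TTensor A B) \<Longrightarrow>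
    ptyp st (\<Gamma> @ [(x, A), (y, B)] @ \<Gamma>') t C \<Longrightarrow> distinct (map fst (\<Gamma> @ \<Delta> @ \<Gamma>')) \<Longrightarrow>
    ptyp st (\<Gamma> @ \<Delta> @ \<Gamma>') (DTens (varpi C) v x y t) C"
| t_unit: "ptyp st [] Unit TOne"
| t_done: "isval v \<Longrightarrow> ptyp st \<Delta> v TOne \<Longrightarrow> ptyp st (\<Gamma> @ \<Gamma>') t A \<Longrightarrow>
    distinct (map fst (\<Gamma> @ \<Delta> @ \<Gamma>')) \<Longrightarrow>
    ptyp st (\<Gamma> @ \<Delta> @ \<Gamma>') (DOne (varpi A) v t) A"
| t_inj1: "isval v \<Longrightarrow> ptyp st \<Gamma> v A \<Longrightarrow> ptyp st \<Gamma> (Inj1 v) (TPlus A B)"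
| t_inj2: "isval v \<Longrightarrow> ptyp st \<Gamma> v B \<Longrightarrow> ptyp st \<Gamma> (Inj2 v) (TPlus A B)"
| t_dsum: "isval v \<Longrightarrow> ptyp st \<Delta> v (TPlus A B) \<Longrightarrow>
    ptyp st (\<Gamma> @ [(x, A)] @ \<Gamma>') t C \<Longrightarrow> ptyp st (\<Gamma> @ [(y, B)] @ \<Gamma>') u C \<Longrightarrow>
    distinct (map fst (\<Gamma> @ \<Delta> @ \<Gamma>')) \<Longrightarrow>
    ptyp st (\<Gamma> @ \<Delta> @ \<Gamma>') (DSum (varpi C) v x t y u) C"
| t_lam: "ptyp st ((x, A) # \<Gamma>) t B \<Longrightarrow> ptyp st \<Gamma> (Lam x t) (TLolli A B)"
| t_app: "isval w \<Longrightarrow> isval v \<Longrightarrow> ptyp st \<Gamma> w A \<Longrightarrow> ptyp st \<Delta> v (TLolli A B) \<Longrightarrow>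
    distinct (map fst (\<Gamma> @ \<Delta>)) \<Longrightarrow> ptyp st (\<Gamma> @ \<Delta>) (App (varpi B) v w) B"
| t_wth: "ptyp st \<Gamma> t A \<Longrightarrow> ptyp st \<Gamma> u B \<Longrightarrow> ptyp st \<Gamma> (Wth t u) (TWith A B)"
| t_prj1: "isval v \<Longrightarrow> ptyp st \<Gamma> v (TWith A1 A2) \<Longrightarrow> ptyp st \<Gamma> (Prj1 (varpi A1) v) A1"
| t_prj2: "isval v \<Longrightarrow> ptyp st \<Gamma> v (TWith A1 A2) \<Longrightarrow> ptyp st \<Gamma> (Prj2 (varpi A2) v) A2"

datatype frame =
    FArg pol tm
  | FPrj1 pol
  | FPrj2 pol
  | FLet pol var tm

type_synonym stack = "frame list"

text \<open>A command (t, s, l, e) stands for the machine command with term t, stack s,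
  resource list l (the list of indices n of the r_n) and polarity e.\<close>
type_synonym cmd = "tm \<times> stack \<times> nat list \<times> pol"

inductive styp :: "bool \<Rightarrow> stack \<Rightarrow> ty \<Rightarrow> ty \<Rightarrow> bool" where
  s_empty: "styp st [] A A"
| s_arg: "styp st s B C \<Longrightarrow> e = varpi B \<Longrightarrow> isval v \<Longrightarrow> ptyp st [] v A \<Longrightarrow>
    styp st (FArg e v # s) (TLolli A B) C"
| s_let: "styp st s B C \<Longrightarrow> e = varpi B \<Longrightarrow> ptyp st [(x, A)] t B \<Longrightarrow>
    styp st (FLet e x t # s) A C"
| s_prj1: "styp st s A1 C \<Longrightarrow> e = varpi A1 \<Longrightarrow> styp st (FPrj1 e # s) (TWith A1 A2) C"
| s_prj2: "styp st s A2 C \<Longrightarrow> e = varpi A2 \<Longrightarrow> styp st (FPrj2 e # s) (TWith A1 A2) C"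

definition ctyp :: "bool \<Rightarrow> cmd \<Rightarrow> ty \<Rightarrow> bool" where
  "ctyp st c A = (case c of (t, s, l, e) \<Rightarrow>
     (\<exists>B. varpi B = e \<and> ptyp st [] t B \<and> styp st s B A))"

inductive red :: "cmd \<Rightarrow> cmd \<Rightarrow> bool" where
  r_letn: "red (Let Neg e x v t, s, l, e) (subst1 v x t, s, l, e)"
| r_letp: "red (Let Pos e x t u, s, l, e) (t, FLet e x u # s, l, Pos)"
| r_pop: "isval v \<Longrightarrow> red (v, FLet e x t # s, l, Pos) (subst1 v x t, s, l, e)"
| r_app: "red (App e v w, s, l, e) (v, FArg e w # s, l, Neg)"
| r_lam: "red (Lam x t, FArg e v # s, l, Neg) (subst1 v x t, s, l, e)"
| r_prj1: "red (Prj1 e v, s, l, e) (v, FPrj1 e # s, l, Neg)"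
| r_prj2: "red (Prj2 e v, s, l, e) (v, FPrj2 e # s, l, Neg)"
| r_wth1: "red (Wth t1 t2, FPrj1 e # s, l, Neg) (t1, s, l, e)"
| r_wth2: "red (Wth t1 t2, FPrj2 e # s, l, Neg) (t2, s, l, e)"
| r_dtens: "red (DTens e (Pair v w) x y t, s, l, e) (subst2 v x w y t, s, l, e)"
| r_done: "red (DOne e Unit t, s, l, e) (t, s, l, e)"
| r_dsum1: "red (DSum e (Inj1 v) x1 t1 x2 t2, s, l, e) (subst1 v x1 t1, s, l, e)"
| r_dsum2: "red (DSum e (Inj2 v) x1 t1 x2 t2, s, l, e) (subst1 v x2 t2, s, l, e)"
| r_new1: "red (New, FArg e Unit # s, n # l, Neg) (Inj1 (Res n), s, l, Pos)"
| r_new2: "red (New, FArg e Unit # s, [], Neg) (Inj2 Unit, s, [], Pos)"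
| r_delete: "red (Delete, FArg e (Res n) # s, l, Neg) (Unit, s, n # l, Pos)"

end

theory Submission
  imports Defs
begin

primrec mapv :: "(var \<Rightarrow> var) \<Rightarrow> tm \<Rightarrow> tm" where
  "mapv h (Var x) = Var (h x)"
| "mapv h New = New"
| "mapv h Delete = Delete"
| "mapv h (Res n) = Res n"
| "mapv h Unit = Unit"
| "mapv h (Pair s t) = Pair (mapv h s) (mapv h t)"
| "mapv h (Inj1 s) = Inj1 (mapv h s)"
| "mapv h (Inj2 s) = Inj2 (mapv h s)"
| "mapv h (Lam x t) = Lam (h x) (mapv h t)"
| "mapv h (Wth s t) = Wth (mapv h s) (mapv h t)"
| "mapv h (Let p e x t u) = Let p e (h x) (mapv h t) (mapv h u)"
| "mapv h (DTens e v x y t) = DTens e (mapv h v) (h x) (h y) (mapv h t)"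
| "mapv h (DOne e v t) = DOne e (mapv h v) (mapv h t)"
| "mapv h (DSum e v x t y u) = DSum e (mapv h v) (h x) (mapv h t) (h y) (mapv h u)"
| "mapv h (App e s t) = App e (mapv h s) (mapv h t)"
| "mapv h (Prj1 e s) = Prj1 e (mapv h s)"
| "mapv h (Prj2 e s) = Prj2 e (mapv h s)"

lemma swap_mapv: "swap a b t = mapv (sw a b) t"
  by (induction t) auto

lemma mapv_mapv: "mapv h1 (mapv h2 t) = mapv (h1 \<circ> h2) t"
  by (induction t) auto

lemma mapv_id: "mapv id t = t"
  by (induction t) auto

lemma fv_mapv: "inj h \<Longrightarrow> fv (mapv h t) = h ` fv t"
  by (induction t) (auto simp: image_Un image_set_diff)

lemma vars_mapv: "vars (mapv h t) = h ` vars t"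
  by (induction t) auto

lemma fv_vars: "fv t \<subseteq> vars t"
  by (induction t) auto

lemma finite_vars: "finite (vars t)"
  by (induction t) auto

lemma finite_fv: "finite (fv t)"
  using fv_vars finite_vars finite_subset by blast

lemma sw_inj: "inj (sw a b)"
  unfolding inj_def sw_def by auto

lemma sw_same[simp]: "sw a a = id"
  by (auto simp: sw_def)

lemma sw_simps[simp]: "sw a b a = b" "sw a b b = a" "z \<noteq> a \<Longrightarrow> z \<noteq> b \<Longrightarrow> sw a b z = z"
  by (auto simp: sw_def)

lemma fresh_notin: "finite S \<Longrightarrow> fresh S \<notin> S"
proof
  assume "finite S" "fresh S \<in> S"
  then have "fresh S \<le> Max (insert 0 S)" by simp
  then show False by (simp add: fresh_def)
qed

lemma finite_img: "finite S \<Longrightarrow> finite (img \<sigma> S)"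
  by (simp add: img_def finite_fv)

lemma img_Var_comp[simp]: "img (Var \<circ> g) S = g ` S"
  by (auto simp: img_def)

lemma Var_comp_upd[simp]: "(Var \<circ> g)(x := Var x) = Var \<circ> (g(x := x))"
  by auto

lemma ren1_prop:
  assumes "ren1 \<sigma> x t = (x', t')"
  shows "t' = swap x x' t \<and> x' \<notin> img \<sigma> (fv t - {x}) \<and> (x' = x \<or> (x' \<notin> vars t \<and> x' \<noteq> x))"
proof -
  let ?S = "img \<sigma> (fv t - {x})"
  have fin: "finite (?S \<union> vars t \<union> {x})" by (simp add: finite_img finite_fv finite_vars)
  show ?thesis
  proof (cases "x \<in> ?S")
    case False
    then show ?thesis using assms by (simp add: ren1_def swap_mapv mapv_id)
  next
    case True
    then have "x' = fresh (?S \<union> vars t \<union> {x})" "t' = swap x x' t"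
      using assms by (auto simp: ren1_def Let_def)
    then show ?thesis using fresh_notin[OF fin] by auto
  qed
qed

lemma ren2_prop:
  assumes "ren2 \<sigma> x y t = (x', y', t')"
  shows "t' = swap y y' (swap x x' t) \<and> x' \<notin> img \<sigma> (fv t - {x, y}) \<and> y' \<notin> img \<sigma> (fv t - {x, y}) \<and>
    ((x' = x \<and> y' = y) \<or> (x' \<notin> vars t \<and> y' \<notin> vars t \<and> x' \<notin> {x, y} \<and> y' \<notin> {x, y, x'}))"
proof -
  let ?S = "img \<sigma> (fv t - {x, y})"
  have fin: "finite (?S \<union> vars t \<union> {x, y})" by (simp add: finite_img finite_fv finite_vars)
  have fin2: "finite (?S \<union> vars t \<union> {x, y, z})" for z by (simp add: finite_img finite_fv finite_vars)
  show ?thesis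
  proof (cases "x \<notin> ?S \<and> y \<notin> ?S")
    case True
    then show ?thesis using assms by (simp add: ren2_def swap_mapv mapv_id)
  next
    case False
    then have "x' = fresh (?S \<union> vars t \<union> {x, y})" "y' = fresh (?S \<union> vars t \<union> {x, y, x'})"
      "t' = swap y y' (swap x x' t)"
      using assms by (auto simp: ren2_def Let_def)
    then show ?thesis using fresh_notin[OF fin] fresh_notin[OF fin2, of x'] by auto
  qed
qed

lemma psubst_id: "(\<forall>z\<in>fv t. \<sigma> z = Var z) \<Longrightarrow> psubst \<sigma> t = t"
proof (induction \<sigma> t rule: psubst.induct)
qed (auto simp: Let_def ren1_def ren2_def img_def)

lemma isval_simps[simp]:
  "isval (Var x)" "isval New" "isval Delete" "isval (Res n)" "isval Unit"
  "isval (Pair a b) \<longleftrightarrow> isval a \<and> isval b"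
  "isval (Inj1 a) \<longleftrightarrow> isval a" "isval (Inj2 a) \<longleftrightarrow> isval a"
  "isval (Lam x t) \<longleftrightarrow> isexp t"
  "isval (Wth a b) \<longleftrightarrow> isexp a \<and> isexp b"
  "isval (Let p e x t u) \<longleftrightarrow> e = Neg \<and> ((p = Pos \<and> isexp t \<and> isval u) \<or> (p = Neg \<and> isval t \<and> isval u))"
  "isval (DTens e v x y t) \<longleftrightarrow> e = Neg \<and> isval v \<and> isval t"
  "isval (DOne e v t) \<longleftrightarrow> e = Neg \<and> isval v \<and> isval t"
  "isval (DSum e v x t y u) \<longleftrightarrow> e = Neg \<and> isval v \<and> isval t \<and> isval u"
  "isval (App e a b) \<longleftrightarrow> e = Neg \<and> isval a \<and> isval b"
  "isval (Prj1 e a) \<longleftrightarrow> e = Neg \<and> isval a"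
  "isval (Prj2 e a) \<longleftrightarrow> e = Neg \<and> isval a"
  by (auto elim: isval.cases intro: isval_isexp.intros)

lemma isexp_triv[simp]: "isexp (Var x)" "isexp New" "isexp Delete" "isexp (Res n)" "isexp Unit"
  by (auto intro: isval_isexp.intros)

lemma ie1[simp]: "isexp (Pair a b) \<longleftrightarrow> isval a \<and> isval b"
  by (rule iffI, (erule isexp.cases; simp), auto intro: isval_isexp.intros)

lemma ie2[simp]: "isexp (Inj1 a) \<longleftrightarrow> isval a"
  by (rule iffI, (erule isexp.cases; simp), auto intro: isval_isexp.intros)

lemma ie3[simp]: "isexp (Inj2 a) \<longleftrightarrow> isval a"
  by (rule iffI, (erule isexp.cases; simp), auto intro: isval_isexp.intros)

lemma ie4[simp]: "isexp (Lam x t) \<longleftrightarrow> isexp t"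
  by (rule iffI, (erule isexp.cases; simp), auto intro: isval_isexp.intros)

lemma ie5[simp]: "isexp (Wth a b) \<longleftrightarrow> isexp a \<and> isexp b"
  by (rule iffI, (erule isexp.cases; simp), auto intro: isval_isexp.intros)

lemma ie6[simp]: "isexp (Let p e x t u) \<longleftrightarrow> isval (Let p e x t u) \<or> (e = Pos \<and> ((p = Pos \<and> isexp t \<and> isexp u) \<or> (p = Neg \<and> isval t \<and> isexp u)))"
  by (rule iffI, (erule isexp.cases; simp del: isval_simps), auto intro: isval_isexp.intros simp del: isval_simps)

lemma ie7[simp]: "isexp (DTens e v x y t) \<longleftrightarrow> isval (DTens e v x y t) \<or> (e = Pos \<and> isval v \<and> isexp t)"
  by (rule iffI, (erule isexp.cases; simp del: isval_simps), auto intro: isval_isexp.intros simp del: isval_simps)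

lemma ie8[simp]: "isexp (DOne e v t) \<longleftrightarrow> isval (DOne e v t) \<or> (e = Pos \<and> isval v \<and> isexp t)"
  by (rule iffI, (erule isexp.cases; simp del: isval_simps), auto intro: isval_isexp.intros simp del: isval_simps)

lemma ie9[simp]: "isexp (DSum e v x t y u) \<longleftrightarrow> isval (DSum e v x t y u) \<or> (e = Pos \<and> isval v \<and> isexp t \<and> isexp u)"
  by (rule iffI, (erule isexp.cases; simp del: isval_simps), auto intro: isval_isexp.intros simp del: isval_simps)

lemma ie10[simp]: "isexp (App e a b) \<longleftrightarrow> isval a \<and> isval b"
  by (rule iffI, (erule isexp.cases; simp), cases e, auto intro: isval_isexp.intros)

lemma ie11[simp]: "isexp (Prj1 e a) \<longleftrightarrow> isval a"
  by (rule iffI, (erule isexp.cases; simp), cases e, auto intro: isval_isexp.intros)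

lemma ie12[simp]: "isexp (Prj2 e a) \<longleftrightarrow> isval a"
  by (rule iffI, (erule isexp.cases; simp), cases e, auto intro: isval_isexp.intros)

lemma isval_mapv: "(isval (mapv h t) \<longleftrightarrow> isval t) \<and> (isexp (mapv h t) \<longleftrightarrow> isexp t)"
  by (induction t) auto

lemma upd_val: "(\<forall>z. isval (\<sigma> z)) \<Longrightarrow> (\<forall>z. isval ((\<sigma>(a := Var a)) z))"
  by simp

lemma isval_psubst:
  "(\<forall>z. isval (\<sigma> z)) \<Longrightarrow> (isval t \<longrightarrow> isval (psubst \<sigma> t)) \<and> (isexp t \<longrightarrow> isexp (psubst \<sigma> t))"
proof (induction \<sigma> t rule: psubst.induct)
  case (1 \<sigma> x)
  then show ?case by (auto intro: isval_isexp.intros)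
next
  case (9 \<sigma> x t)
  obtain x' t' where r: "ren1 \<sigma> x t = (x', t')" by fastforce
  then have e: "t' = mapv (sw x x') t" using ren1_prop swap_mapv by metis
  have IH: "(isval t' \<longrightarrow> isval (psubst (\<sigma>(x' := Var x')) t')) \<and> (isexp t' \<longrightarrow> isexp (psubst (\<sigma>(x' := Var x')) t'))"
    using 9(1)[OF r[symmetric]] upd_val[OF 9(2), of x'] unfolding prod.sel by blast
  show ?case using IH r e by (simp add: Let_def isval_mapv)
next
  case (11 \<sigma> p e x t u)
  obtain x' t' where r: "ren1 \<sigma> x u = (x', t')" by fastforce
  then have e: "t' = mapv (sw x x') u" using ren1_prop swap_mapv by metis
  have IH: "(isval t' \<longrightarrow> isval (psubst (\<sigma>(x' := Var x')) t')) \<and> (isexp t' \<longrightarrow> isexp (psubst (\<sigma>(x' := Var x')) t'))"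
    using 11(2)[OF r[symmetric]] upd_val[OF 11(3), of x'] unfolding prod.sel by blast
  have IH2: "(isval t \<longrightarrow> isval (psubst \<sigma> t)) \<and> (isexp t \<longrightarrow> isexp (psubst \<sigma> t))"
    using 11(1)[OF r[symmetric]] 11(3) by blast
  show ?case using IH IH2 r e by (cases p; cases e; simp add: Let_def isval_mapv)
next
  case (12 \<sigma> e v x y t)
  obtain x' y' t' where r: "ren2 \<sigma> x y t = (x', y', t')" by (metis prod.exhaust)
  then have e: "t' = mapv (sw y y') (mapv (sw x x') t)" using ren2_prop swap_mapv by metis
  have IH: "(isval t' \<longrightarrow> isval (psubst (\<sigma>(x' := Var x', y' := Var y')) t')) \<and> (isexp t' \<longrightarrow> isexp (psubst (\<sigma>(x' := Var x', y' := Var y')) t'))"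
    using 12(2)[OF r[symmetric]] upd_val[OF upd_val[OF 12(3), of x'], of y'] unfolding prod.sel by blast
  have IH2: "(isval v \<longrightarrow> isval (psubst \<sigma> v)) \<and> (isexp v \<longrightarrow> isexp (psubst \<sigma> v))"
    using 12(1)[OF r[symmetric]] 12(3) by blast
  show ?case using IH IH2 r e by (cases e; simp add: Let_def isval_mapv)
next
  case (14 \<sigma> e v x t y u)
  obtain x' t' where r: "ren1 \<sigma> x t = (x', t')" by fastforce
  then have e1: "t' = mapv (sw x x') t" using ren1_prop swap_mapv by metis
  obtain y' u' where q: "ren1 \<sigma> y u = (y', u')" by fastforce
  then have e2: "u' = mapv (sw y y') u" using ren1_prop swap_mapv by metis
  have IH: "(isval t' \<longrightarrow> isval (psubst (\<sigma>(x' := Var x')) t')) \<and> (isexp t' \<longrightarrow> isexp (psubst (\<sigma>(x' := Var x')) t'))"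
    using 14(2)[OF r[symmetric] q[symmetric]] upd_val[OF 14(4), of x'] unfolding prod.sel by blast
  have IH3: "(isval u' \<longrightarrow> isval (psubst (\<sigma>(y' := Var y')) u')) \<and> (isexp u' \<longrightarrow> isexp (psubst (\<sigma>(y' := Var y')) u'))"
    using 14(3)[OF r[symmetric] q[symmetric]] upd_val[OF 14(4), of y'] unfolding prod.sel by blast
  have IH2: "(isval v \<longrightarrow> isval (psubst \<sigma> v)) \<and> (isexp v \<longrightarrow> isexp (psubst \<sigma> v))"
    using 14(1)[OF r[symmetric] q[symmetric]] 14(4) by blast
  show ?case using IH IH2 IH3 r q e1 e2 by (cases e; simp add: Let_def isval_mapv)
qed (auto simp: Let_def)

inductive ptypX :: "bool \<Rightarrow> ctx \<Rightarrow> tm \<Rightarrow> ty \<Rightarrow> bool" where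
  x_var: "ptypX st [(x, A)] (Var x) A"
| x_exch: "st \<Longrightarrow> ptypX st \<Gamma> t A \<Longrightarrow> mset \<Gamma>' = mset \<Gamma> \<Longrightarrow> ptypX st \<Gamma>' t A"
| x_new: "ptypX st [] New (TLolli TOne (TPlus TR TOne))"
| x_delete: "ptypX st [] Delete (TLolli TR TOne)"
| x_res: "ptypX st [] (Res n) TR"
| x_let: "ptypX st \<Delta> t A \<Longrightarrow> ptypX st (\<Gamma> @ [(x, A)]) u B \<Longrightarrow> distinct (map fst (\<Gamma> @ \<Delta>)) \<Longrightarrow>
    ptypX st (\<Gamma> @ \<Delta>) (Let (varpi A) (varpi B) x t u) B"
| x_pair: "isval v \<Longrightarrow> isval w \<Longrightarrow> ptypX st \<Gamma> v A \<Longrightarrow> ptypX st \<Delta> w B \<Longrightarrow>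
    distinct (map fst (\<Gamma> @ \<Delta>)) \<Longrightarrow> ptypX st (\<Gamma> @ \<Delta>) (Pair v w) (TTensor A B)"
| x_dtens: "isval v \<Longrightarrow> ptypX st \<Delta> v (TTensor A B) \<Longrightarrow>
    ptypX st (\<Gamma> @ [(x, A), (y, B)] @ \<Gamma>') t C \<Longrightarrow> distinct (map fst (\<Gamma> @ \<Delta> @ \<Gamma>')) \<Longrightarrow>
    ptypX st (\<Gamma> @ \<Delta> @ \<Gamma>') (DTens (varpi C) v x y t) C"
| x_unit: "ptypX st [] Unit TOne"
| x_done: "isval v \<Longrightarrow> ptypX st \<Delta> v TOne \<Longrightarrow> ptypX st (\<Gamma> @ \<Gamma>') t A \<Longrightarrow>
    distinct (map fst (\<Gamma> @ \<Delta> @ \<Gamma>')) \<Longrightarrow>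
    ptypX st (\<Gamma> @ \<Delta> @ \<Gamma>') (DOne (varpi A) v t) A"
| x_inj1: "isval v \<Longrightarrow> ptypX st \<Gamma> v A \<Longrightarrow> ptypX st \<Gamma> (Inj1 v) (TPlus A B)"
| x_inj2: "isval v \<Longrightarrow> ptypX st \<Gamma> v B \<Longrightarrow> ptypX st \<Gamma> (Inj2 v) (TPlus A B)"
| x_dsum: "isval v \<Longrightarrow> ptypX st \<Delta> v (TPlus A B) \<Longrightarrow>
    ptypX st (\<Gamma> @ [(x, A)] @ \<Gamma>') t C \<Longrightarrow> ptypX st (\<Gamma> @ [(y, B)] @ \<Gamma>') u C \<Longrightarrow>
    distinct (map fst (\<Gamma> @ \<Delta> @ \<Gamma>')) \<Longrightarrow>
    ptypX st (\<Gamma> @ \<Delta> @ \<Gamma>') (DSum (varpi C) v x t y u) C"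
| x_lam: "ptypX st ((x, A) # \<Gamma>) t B \<Longrightarrow> ptypX st \<Gamma> (Lam x t) (TLolli A B)"
| x_app: "isval w \<Longrightarrow> isval v \<Longrightarrow> ptypX st \<Gamma> w A \<Longrightarrow> ptypX st \<Delta> v (TLolli A B) \<Longrightarrow>
    distinct (map fst (\<Gamma> @ \<Delta>)) \<Longrightarrow> ptypX st (\<Gamma> @ \<Delta>) (App (varpi B) v w) B"
| x_wth: "ptypX st \<Gamma> t A \<Longrightarrow> ptypX st \<Gamma> u B \<Longrightarrow> ptypX st \<Gamma> (Wth t u) (TWith A B)"
| x_prj1: "isval v \<Longrightarrow> ptypX st \<Gamma> v (TWith A1 A2) \<Longrightarrow> ptypX st \<Gamma> (Prj1 (varpi A1) v) A1"
| x_prj2: "isval v \<Longrightarrow> ptypX st \<Gamma> v (TWith A1 A2) \<Longrightarrow> ptypX st \<Gamma> (Prj2 (varpi A2) v) A2"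

lemma distinct_mset_map: "mset G' = mset G \<Longrightarrow> distinct (map fst G) \<Longrightarrow> distinct (map fst G')"
  by (metis mset_eq_imp_distinct_iff mset_map)

lemma ptypX_distinct: "ptypX st \<Gamma> t A \<Longrightarrow> distinct (map fst \<Gamma>)"
  by (induction rule: ptypX.induct) (auto dest: distinct_mset_map)

lemma ptypX_fv: "ptypX st \<Gamma> t A \<Longrightarrow> fv t = fst ` set \<Gamma>"
proof (induction rule: ptypX.induct)
  case (x_exch st \<Gamma> t A \<Gamma>')
  then show ?case by (metis mset_eq_setD)
next
  case (x_let st \<Delta> t A \<Gamma> x u B)
  then show ?case using ptypX_distinct[OF x_let.hyps(2)] by auto
next
  case (x_dtens v st \<Delta> A B \<Gamma> x y \<Gamma>' t C)
  then show ?case using ptypX_distinct[OF x_dtens.hyps(3)] by auto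
next
  case (x_dsum v st \<Delta> A B \<Gamma> x \<Gamma>' t C y u)
  then show ?case using ptypX_distinct[OF x_dsum.hyps(3)] ptypX_distinct[OF x_dsum.hyps(4)] by auto
next
  case (x_lam st x A \<Gamma> t B)
  then show ?case using ptypX_distinct[OF x_lam.hyps(1)] by auto
qed auto

lemma ptypX_isval: "ptypX st \<Gamma> t A \<Longrightarrow> isexp t \<and> (varpi A = Neg \<longrightarrow> isval t)"
proof (induction rule: ptypX.induct)
  case (x_let st \<Delta> t A \<Gamma> x u B)
  then show ?case by (cases "varpi A"; cases "varpi B"; simp)
next
  case (x_dtens v st \<Delta> A B \<Gamma> x y \<Gamma>' t C)
  then show ?case by (cases "varpi C"; simp)
next
  case (x_done v st \<Delta> \<Gamma> \<Gamma>' t A)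
  then show ?case by (cases "varpi A"; simp)
next
  case (x_dsum v st \<Delta> A B \<Gamma> x \<Gamma>' t C y u)
  then show ?case by (cases "varpi C"; simp)
next
  case (x_prj1 v st \<Gamma> A1 A2)
  then show ?case by (cases "varpi A1"; simp)
next
  case (x_prj2 v st \<Gamma> A1 A2)
  then show ?case by (cases "varpi A2"; simp)
next
  case (x_app w v st \<Gamma> A \<Delta> B)
  then show ?case by (cases "varpi B"; simp)
qed auto

lemma psubst_Var: "psubst Var t = t"
  by (rule psubst_id) simp

lemma ptypX_ptyp_True: "ptypX True \<Gamma> t A \<Longrightarrow> ptyp True \<Gamma> t A"
proof (induction "True" \<Gamma> t A rule: ptypX.induct)
  case (x_exch \<Gamma> t A \<Gamma>')
  have d: "distinct (map fst \<Gamma>')" using distinct_mset_map[OF \<open>mset \<Gamma>' = mset \<Gamma>\<close> ptypX_distinct[OF \<open>ptypX True \<Gamma> t A\<close>]] .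
  have "ptyp True \<Gamma>' (psubst (\<lambda>z. if z \<in> fst ` set \<Gamma> then Var (id z) else Var z) t) A"
    by (rule t_struct) (use x_exch d in auto)
  moreover have "(\<lambda>z. if z \<in> fst ` set \<Gamma> then Var (id z) else Var z) = Var" by auto
  ultimately show ?case by (simp add: psubst_Var)
qed (auto intro: ptyp.intros)

lemma ptyp_False: "ptyp False \<Gamma> t A \<longleftrightarrow> ptypX False \<Gamma> t A"
proof
  show "ptyp False \<Gamma> t A \<Longrightarrow> ptypX False \<Gamma> t A"
    by (induction "False" \<Gamma> t A rule: ptyp.induct) (auto intro: ptypX.intros)
  show "ptypX False \<Gamma> t A \<Longrightarrow> ptyp False \<Gamma> t A"
    by (induction "False" \<Gamma> t A rule: ptypX.induct) (auto intro: ptyp.intros)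
qed

definition cf :: "(var \<Rightarrow> var) \<Rightarrow> (var \<Rightarrow> var) \<Rightarrow> var \<times> ty \<Rightarrow> var \<times> ty" where
  "cf g h = (\<lambda>(z, B). (g (h z), B))"

lemma cf_simp[simp]: "cf g h (z, B) = (g (h z), B)"
  by (simp add: cf_def)

lemma map_fst_cf: "map fst (map (cf g h) G) = map (g \<circ> h) (map fst G)"
  by (induction G) auto

lemma set_fst_cf: "fst ` set (map (cf g h) G) = g ` h ` fst ` set G"
  by (induction G) auto

lemma distinct_cf:
  "distinct (map fst G) \<Longrightarrow> inj h \<Longrightarrow> inj_on g (h ` fst ` set G) \<Longrightarrow> distinct (map fst (map (cf g h) G))"
  unfolding map_fst_cf distinct_map
  by (metis comp_inj_on inj_on_subset list.set_map subset_UNIV)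

lemma cf_cong: "(\<forall>z\<in>fst ` set G. g' (h' z) = g (h z)) \<Longrightarrow> map (cf g' h') G = map (cf g h) G"
  by (induction G) auto

lemma inj_on_upd: "inj_on g S \<Longrightarrow> x' \<notin> S \<Longrightarrow> x' \<notin> g ` S \<Longrightarrow> inj_on (g(x' := x')) (insert x' S)"
  unfolding inj_on_def by (auto split: if_splits)

lemma ren1_ctx:
  assumes r: "ren1 (Var \<circ> g) (h x) (mapv h u) = (x', u')" and ih: "inj h" and D: "fv u - {x} = D" and xD: "x \<notin> D"
  shows "u' = mapv (sw (h x) x' \<circ> h) u" "\<forall>z\<in>D. (sw (h x) x' \<circ> h) z = h z" "(sw (h x) x' \<circ> h) x = x'"
    "x' \<notin> g ` h ` D" "x' \<notin> h ` D"
proof -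
  note P = ren1_prop[OF r]
  show "u' = mapv (sw (h x) x' \<circ> h) u" using P by (simp add: swap_mapv mapv_mapv)
  have fvm: "fv (mapv h u) - {h x} = h ` D"
    unfolding D[symmetric] fv_mapv[OF ih] image_set_diff[OF ih] by simp
  have P2: "x' \<notin> g ` (fv (mapv h u) - {h x})" using P by simp
  then show "x' \<notin> g ` h ` D" unfolding fvm .
  have hv: "h ` D \<subseteq> vars (mapv h u)" using fv_vars fvm by blast
  have hx: "h x \<notin> h ` D" using xD ih by (simp add: inj_image_mem_iff)
  have "x' = h x \<or> x' \<notin> vars (mapv h u)" using P by blast
  then show xn: "x' \<notin> h ` D" using hv hx by (elim disjE) auto
  show "\<forall>z\<in>D. (sw (h x) x' \<circ> h) z = h z"
  proof
    fix z assume "z \<in> D"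
    then have "h z \<in> h ` D" by simp
    then have "h z \<noteq> h x" "h z \<noteq> x'" using hx xn by metis+
    then show "(sw (h x) x' \<circ> h) z = h z" by simp
  qed
  show "(sw (h x) x' \<circ> h) x = x'" by simp
qed

lemma ren2_ctx:
  assumes r: "ren2 (Var \<circ> g) (h x) (h y) (mapv h u) = (x', y', u')" and ih: "inj h" and D: "fv u - {x, y} = D"
    and xD: "x \<notin> D" and yD: "y \<notin> D" and xy: "x \<noteq> y"
  shows "u' = mapv (sw (h y) y' \<circ> sw (h x) x' \<circ> h) u" "\<forall>z\<in>D. (sw (h y) y' \<circ> sw (h x) x' \<circ> h) z = h z"
    "(sw (h y) y' \<circ> sw (h x) x' \<circ> h) x = x'" "(sw (h y) y' \<circ> sw (h x) x' \<circ> h) y = y'"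
    "x' \<notin> g ` h ` D" "x' \<notin> h ` D" "y' \<notin> g ` h ` D" "y' \<notin> h ` D" "x' \<noteq> y'"
proof -
  note P = ren2_prop[OF r]
  show "u' = mapv (sw (h y) y' \<circ> sw (h x) x' \<circ> h) u" using P by (simp add: swap_mapv mapv_mapv comp_assoc)
  have fvm: "fv (mapv h u) - {h x, h y} = h ` D"
    unfolding D[symmetric] fv_mapv[OF ih] image_set_diff[OF ih] by simp
  have P2: "x' \<notin> g ` (fv (mapv h u) - {h x, h y})" "y' \<notin> g ` (fv (mapv h u) - {h x, h y})" using P by simp_all
  then show "x' \<notin> g ` h ` D" "y' \<notin> g ` h ` D" unfolding fvm by simp_all
  have hv: "h ` D \<subseteq> vars (mapv h u)" using fv_vars fvm by blast
  have hx: "h x \<notin> h ` D" "h y \<notin> h ` D" "h x \<noteq> h y" using xD yD xy ih by (simp_all add: inj_image_mem_iff inj_eq)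
  have C: "(x' = h x \<and> y' = h y) \<or> (x' \<notin> vars (mapv h u) \<and> y' \<notin> vars (mapv h u) \<and> x' \<notin> {h x, h y} \<and> y' \<notin> {h x, h y, x'})"
    using P by blast
  then show xn: "x' \<notin> h ` D" using hv hx by (elim disjE) auto
  from C show yn: "y' \<notin> h ` D" using hv hx by (elim disjE) auto
  from C show "x' \<noteq> y'" using hx by (elim disjE) auto
  show "\<forall>z\<in>D. (sw (h y) y' \<circ> sw (h x) x' \<circ> h) z = h z"
  proof
    fix z assume "z \<in> D"
    then have "h z \<in> h ` D" by simp
    then have "h z \<noteq> h x" "h z \<noteq> x'" "h z \<noteq> h y" "h z \<noteq> y'" using hx xn yn by metis+
    then show "(sw (h y) y' \<circ> sw (h x) x' \<circ> h) z = h z" by simp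
  qed
  from C show "(sw (h y) y' \<circ> sw (h x) x' \<circ> h) x = x'" using hx by (elim disjE) (auto simp: sw_def)
  from C show "(sw (h y) y' \<circ> sw (h x) x' \<circ> h) y = y'" using hx by (elim disjE) (auto simp: sw_def)
qed

lemma Var_comp_upd2[simp]: "(Var \<circ> g)(x := Var x, y := Var y) = Var \<circ> (g(x := x, y := y))"
  by auto

lemma bind_ctx:
  assumes "fst ` set G \<subseteq> D" "\<forall>z\<in>D. h' z = h z" "\<forall>z\<in>D. g' (h z) = g (h z)"
  shows "map (cf g' h') G = map (cf g h) G"
  by (rule cf_cong) (use assms in auto)

lemma inj_sub: "inj_on g (h ` fst ` set G) \<Longrightarrow> set G' \<subseteq> set G \<Longrightarrow> inj_on g (h ` fst ` set G')"
  by (erule inj_on_subset) auto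

lemma ptypX_rename:
  "ptypX st \<Gamma> t A \<Longrightarrow> inj h \<Longrightarrow> inj_on g (h ` fst ` set \<Gamma>) \<Longrightarrow>
   ptypX st (map (cf g h) \<Gamma>) (psubst (Var \<circ> g) (mapv h t)) A"
proof (induction arbitrary: h g rule: ptypX.induct)
  case (x_var st x A)
  then show ?case by (simp add: ptypX.x_var)
next
  case (x_exch st \<Gamma> t A \<Gamma>')
  have "fst ` set \<Gamma>' = fst ` set \<Gamma>" using x_exch.hyps(3) by (metis mset_eq_setD)
  then have "inj_on g (h ` fst ` set \<Gamma>)" using x_exch.prems(2) by simp
  then have "ptypX st (map (cf g h) \<Gamma>) (psubst (Var \<circ> g) (mapv h t)) A" using x_exch.IH[OF x_exch.prems(1)] by blast
  then show ?case by (rule ptypX.x_exch[OF x_exch.hyps(1)]) (use x_exch.hyps in \<open>simp add: mset_map\<close>)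
next
  case (x_new st) then show ?case by (simp add: ptypX.x_new)
next
  case (x_delete st) then show ?case by (simp add: ptypX.x_delete)
next
  case (x_res st n) then show ?case by (simp add: ptypX.x_res)
next
  case (x_unit st) then show ?case by (simp add: ptypX.x_unit)
next
  case (x_let st \<Delta> t A \<Gamma> x u B)
  have d: "distinct (map fst (\<Gamma> @ [(x, A)]))" by (rule ptypX_distinct[OF x_let.hyps(2)])
  then have xD: "x \<notin> fst ` set \<Gamma>" by auto
  have fvu: "fv u - {x} = fst ` set \<Gamma>" using ptypX_fv[OF x_let.hyps(2)] xD by auto
  obtain x' u' where r: "ren1 (Var \<circ> g) (h x) (mapv h u) = (x', u')" by fastforce
  note R = ren1_ctx[OF r x_let.prems(1) fvu xD]
  define h' where "h' = sw (h x) x' \<circ> h"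
  define g' where "g' = g(x' := x')"
  have ig: "inj_on g (h ` fst ` set \<Gamma>)" "inj_on g (h ` fst ` set \<Delta>)"
    using inj_sub[OF x_let.prems(2)] by auto
  have inj': "inj h'" unfolding h'_def using x_let.prems(1) sw_inj inj_compose by blast
  have hset: "h' ` fst ` set (\<Gamma> @ [(x, A)]) = insert x' (h ` fst ` set \<Gamma>)"
    using R(2,3) unfolding h'_def by force
  have ig': "inj_on g' (h' ` fst ` set (\<Gamma> @ [(x, A)]))" unfolding hset g'_def
    by (rule inj_on_upd[OF ig(1) R(5) R(4)])
  have ctx: "map (cf g' h') (\<Gamma> @ [(x, A)]) = map (cf g h) \<Gamma> @ [(x', A)]"
  proof -
    have "map (cf g' h') \<Gamma> = map (cf g h) \<Gamma>"
      by (rule bind_ctx[of _ "fst ` set \<Gamma>"]) (use R(2,5) in \<open>auto simp: h'_def g'_def\<close>)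
    then show ?thesis using R(3) by (simp add: h'_def g'_def)
  qed
  have IHu: "ptypX st (map (cf g h) \<Gamma> @ [(x', A)]) (psubst (Var \<circ> g') (mapv h' u)) B"
    using x_let.IH(2)[OF inj' ig'] unfolding ctx .
  have IHt: "ptypX st (map (cf g h) \<Delta>) (psubst (Var \<circ> g) (mapv h t)) A"
    using x_let.IH(1)[OF x_let.prems(1) ig(2)] .
  have dist: "distinct (map fst (map (cf g h) \<Gamma> @ map (cf g h) \<Delta>))"
    using distinct_cf[OF x_let.hyps(3) x_let.prems] by simp
  have "ptypX st (map (cf g h) \<Gamma> @ map (cf g h) \<Delta>)
     (Let (varpi A) (varpi B) x' (psubst (Var \<circ> g) (mapv h t)) (psubst (Var \<circ> g') (mapv h' u))) B"
    by (rule ptypX.x_let[OF IHt IHu dist])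
  then show ?case using r R(1) unfolding h'_def g'_def by (simp only: mapv.simps psubst.simps Let_def r prod.sel Var_comp_upd map_append)
next
  case (x_lam st x A \<Gamma> t B)
  have d: "distinct (map fst ((x, A) # \<Gamma>))" by (rule ptypX_distinct[OF x_lam.hyps(1)])
  then have xD: "x \<notin> fst ` set \<Gamma>" by auto
  have fvu: "fv t - {x} = fst ` set \<Gamma>" using ptypX_fv[OF x_lam.hyps(1)] xD by auto
  obtain x' u' where r: "ren1 (Var \<circ> g) (h x) (mapv h t) = (x', u')" by fastforce
  note R = ren1_ctx[OF r x_lam.prems(1) fvu xD]
  define h' where "h' = sw (h x) x' \<circ> h"
  define g' where "g' = g(x' := x')"
  have ig: "inj_on g (h ` fst ` set \<Gamma>)" using x_lam.prems(2) by simp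
  have inj': "inj h'" unfolding h'_def using x_lam.prems(1) sw_inj inj_compose by blast
  have hset: "h' ` fst ` set ((x, A) # \<Gamma>) = insert x' (h ` fst ` set \<Gamma>)"
    using R(2,3) unfolding h'_def by force
  have ig': "inj_on g' (h' ` fst ` set ((x, A) # \<Gamma>))" unfolding hset g'_def
    by (rule inj_on_upd[OF ig(1) R(5) R(4)])
  have ctx: "map (cf g' h') ((x, A) # \<Gamma>) = (x', A) # map (cf g h) \<Gamma>"
  proof -
    have "map (cf g' h') \<Gamma> = map (cf g h) \<Gamma>"
      by (rule bind_ctx[of _ "fst ` set \<Gamma>"]) (use R(2,5) in \<open>auto simp: h'_def g'_def\<close>)
    then show ?thesis using R(3) by (simp add: h'_def g'_def)
  qed
  have IHu: "ptypX st ((x', A) # map (cf g h) \<Gamma>) (psubst (Var \<circ> g') (mapv h' t)) B"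
    using x_lam.IH[OF inj' ig'] unfolding ctx .
  have "ptypX st (map (cf g h) \<Gamma>) (Lam x' (psubst (Var \<circ> g') (mapv h' t))) (TLolli A B)"
    by (rule ptypX.x_lam[OF IHu])
  then show ?case using r R(1) unfolding h'_def g'_def by (simp only: mapv.simps psubst.simps Let_def r prod.sel Var_comp_upd map_append)
next
  case (x_pair v w st \<Gamma> A \<Delta> B)
  have ig: "inj_on g (h ` fst ` set \<Gamma>)" "inj_on g (h ` fst ` set \<Delta>)"
    using inj_sub[OF x_pair.prems(2)] by auto
  have dist: "distinct (map fst (map (cf g h) \<Gamma> @ map (cf g h) \<Delta>))"
    using distinct_cf[OF x_pair.hyps(5) x_pair.prems] by simp
  have iv: "isval (psubst (Var \<circ> g) (mapv h v))" "isval (psubst (Var \<circ> g) (mapv h w))"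
    using isval_psubst[of "Var \<circ> g"] isval_mapv x_pair.hyps(1,2) by auto
  show ?case using ptypX.x_pair[OF iv x_pair.IH(1)[OF x_pair.prems(1) ig(1)] x_pair.IH(2)[OF x_pair.prems(1) ig(2)] dist]
    by (simp only: map_append mapv.simps psubst.simps)
next
  case (x_inj1 v st \<Gamma> A B)
  have iv: "isval (psubst (Var \<circ> g) (mapv h v))"
    using isval_psubst[of "Var \<circ> g"] isval_mapv x_inj1.hyps(1) by auto
  show ?case using ptypX.x_inj1[OF iv x_inj1.IH[OF x_inj1.prems]] by (simp only: mapv.simps psubst.simps)
next
  case (x_inj2 v st \<Gamma> B A)
  have iv: "isval (psubst (Var \<circ> g) (mapv h v))"
    using isval_psubst[of "Var \<circ> g"] isval_mapv x_inj2.hyps(1) by auto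
  show ?case using ptypX.x_inj2[OF iv x_inj2.IH[OF x_inj2.prems]] by (simp only: mapv.simps psubst.simps)
next
  case (x_app w v st \<Gamma> A \<Delta> B)
  have ig: "inj_on g (h ` fst ` set \<Gamma>)" "inj_on g (h ` fst ` set \<Delta>)"
    using inj_sub[OF x_app.prems(2)] by auto
  have dist: "distinct (map fst (map (cf g h) \<Gamma> @ map (cf g h) \<Delta>))"
    using distinct_cf[OF x_app.hyps(5) x_app.prems] by simp
  have iv: "isval (psubst (Var \<circ> g) (mapv h w))" "isval (psubst (Var \<circ> g) (mapv h v))"
    using isval_psubst[of "Var \<circ> g"] isval_mapv x_app.hyps(1,2) by auto
  show ?case using ptypX.x_app[OF iv x_app.IH(1)[OF x_app.prems(1) ig(1)] x_app.IH(2)[OF x_app.prems(1) ig(2)] dist]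
    by (simp only: map_append mapv.simps psubst.simps)
next
  case (x_wth st \<Gamma> t A u B)
  show ?case using ptypX.x_wth[OF x_wth.IH(1)[OF x_wth.prems] x_wth.IH(2)[OF x_wth.prems]] by (simp only: mapv.simps psubst.simps)
next
  case (x_prj1 v st \<Gamma> A1 A2)
  have iv: "isval (psubst (Var \<circ> g) (mapv h v))"
    using isval_psubst[of "Var \<circ> g"] isval_mapv x_prj1.hyps(1) by auto
  show ?case using ptypX.x_prj1[OF iv x_prj1.IH[OF x_prj1.prems]] by (simp only: mapv.simps psubst.simps)
next
  case (x_prj2 v st \<Gamma> A1 A2)
  have iv: "isval (psubst (Var \<circ> g) (mapv h v))"
    using isval_psubst[of "Var \<circ> g"] isval_mapv x_prj2.hyps(1) by auto
  show ?case using ptypX.x_prj2[OF iv x_prj2.IH[OF x_prj2.prems]] by (simp only: mapv.simps psubst.simps)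
next
  case (x_done v st \<Delta> \<Gamma> \<Gamma>' t A)
  have ig: "inj_on g (h ` fst ` set (\<Gamma> @ \<Gamma>'))" "inj_on g (h ` fst ` set \<Delta>)"
    using inj_sub[OF x_done.prems(2), of "\<Gamma> @ \<Gamma>'"] inj_sub[OF x_done.prems(2), of \<Delta>] by auto
  have dist: "distinct (map fst (map (cf g h) \<Gamma> @ map (cf g h) \<Delta> @ map (cf g h) \<Gamma>'))"
    using distinct_cf[OF x_done.hyps(4) x_done.prems] by simp
  have iv: "isval (psubst (Var \<circ> g) (mapv h v))"
    using isval_psubst[of "Var \<circ> g"] isval_mapv x_done.hyps(1) by auto
  have IHt: "ptypX st (map (cf g h) \<Gamma> @ map (cf g h) \<Gamma>') (psubst (Var \<circ> g) (mapv h t)) A"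
    using x_done.IH(2)[OF x_done.prems(1) ig(1)] by (simp only: map_append)
  show ?case using ptypX.x_done[OF iv x_done.IH(1)[OF x_done.prems(1) ig(2)] IHt dist]
    by (simp only: map_append mapv.simps psubst.simps)
next
  case (x_dsum v st \<Delta> A B \<Gamma> x \<Gamma>' t C y u)
  let ?D = "fst ` set (\<Gamma> @ \<Gamma>')"
  have d1: "distinct (map fst (\<Gamma> @ [(x, A)] @ \<Gamma>'))" by (rule ptypX_distinct[OF x_dsum.hyps(3)])
  have d2: "distinct (map fst (\<Gamma> @ [(y, B)] @ \<Gamma>'))" by (rule ptypX_distinct[OF x_dsum.hyps(4)])
  have xD: "x \<notin> ?D" using d1 by auto
  have yD: "y \<notin> ?D" using d2 by auto
  have fvt: "fv t - {x} = ?D" using ptypX_fv[OF x_dsum.hyps(3)] xD by auto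
  have fvu: "fv u - {y} = ?D" using ptypX_fv[OF x_dsum.hyps(4)] yD by auto
  obtain x' t' where r: "ren1 (Var \<circ> g) (h x) (mapv h t) = (x', t')" by fastforce
  obtain y' u' where q: "ren1 (Var \<circ> g) (h y) (mapv h u) = (y', u')" by fastforce
  note R = ren1_ctx[OF r x_dsum.prems(1) fvt xD]
  note Q = ren1_ctx[OF q x_dsum.prems(1) fvu yD]
  define h1 where "h1 = sw (h x) x' \<circ> h"
  define g1 where "g1 = g(x' := x')"
  define h2 where "h2 = sw (h y) y' \<circ> h"
  define g2 where "g2 = g(y' := y')"
  have ig: "inj_on g (h ` ?D)" "inj_on g (h ` fst ` set \<Delta>)"
    using inj_sub[OF x_dsum.prems(2), of "\<Gamma> @ \<Gamma>'"] inj_sub[OF x_dsum.prems(2), of \<Delta>] by auto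
  have inj1: "inj h1" unfolding h1_def using x_dsum.prems(1) sw_inj inj_compose by blast
  have inj2: "inj h2" unfolding h2_def using x_dsum.prems(1) sw_inj inj_compose by blast
  have hset1: "h1 ` fst ` set (\<Gamma> @ [(x, A)] @ \<Gamma>') = insert x' (h ` ?D)"
    using R(2,3) unfolding h1_def by force
  have hset2: "h2 ` fst ` set (\<Gamma> @ [(y, B)] @ \<Gamma>') = insert y' (h ` ?D)"
    using Q(2,3) unfolding h2_def by force
  have ig1: "inj_on g1 (h1 ` fst ` set (\<Gamma> @ [(x, A)] @ \<Gamma>'))" unfolding hset1 g1_def
    by (rule inj_on_upd[OF ig(1) R(5) R(4)])
  have ig2: "inj_on g2 (h2 ` fst ` set (\<Gamma> @ [(y, B)] @ \<Gamma>'))" unfolding hset2 g2_def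
    by (rule inj_on_upd[OF ig(1) Q(5) Q(4)])
  have ctx1: "map (cf g1 h1) (\<Gamma> @ [(x, A)] @ \<Gamma>') = map (cf g h) \<Gamma> @ [(x', A)] @ map (cf g h) \<Gamma>'"
  proof -
    have "map (cf g1 h1) \<Gamma> = map (cf g h) \<Gamma>"
      by (rule bind_ctx[of _ ?D]) (use R(2,5) in \<open>auto simp: h1_def g1_def\<close>)
    moreover have "map (cf g1 h1) \<Gamma>' = map (cf g h) \<Gamma>'"
      by (rule bind_ctx[of _ ?D]) (use R(2,5) in \<open>auto simp: h1_def g1_def\<close>)
    ultimately show ?thesis using R(3) by (simp add: h1_def g1_def)
  qed
  have ctx2: "map (cf g2 h2) (\<Gamma> @ [(y, B)] @ \<Gamma>') = map (cf g h) \<Gamma> @ [(y', B)] @ map (cf g h) \<Gamma>'"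
  proof -
    have "map (cf g2 h2) \<Gamma> = map (cf g h) \<Gamma>"
      by (rule bind_ctx[of _ ?D]) (use Q(2,5) in \<open>auto simp: h2_def g2_def\<close>)
    moreover have "map (cf g2 h2) \<Gamma>' = map (cf g h) \<Gamma>'"
      by (rule bind_ctx[of _ ?D]) (use Q(2,5) in \<open>auto simp: h2_def g2_def\<close>)
    ultimately show ?thesis using Q(3) by (simp add: h2_def g2_def)
  qed
  have IHt: "ptypX st (map (cf g h) \<Gamma> @ [(x', A)] @ map (cf g h) \<Gamma>') (psubst (Var \<circ> g1) (mapv h1 t)) C"
    using x_dsum.IH(2)[OF inj1 ig1] unfolding ctx1 .
  have IHu: "ptypX st (map (cf g h) \<Gamma> @ [(y', B)] @ map (cf g h) \<Gamma>') (psubst (Var \<circ> g2) (mapv h2 u)) C"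
    using x_dsum.IH(3)[OF inj2 ig2] unfolding ctx2 .
  have dist: "distinct (map fst (map (cf g h) \<Gamma> @ map (cf g h) \<Delta> @ map (cf g h) \<Gamma>'))"
    using distinct_cf[OF x_dsum.hyps(5) x_dsum.prems] by simp
  have iv: "isval (psubst (Var \<circ> g) (mapv h v))"
    using isval_psubst[of "Var \<circ> g"] isval_mapv x_dsum.hyps(1) by auto
  have "ptypX st (map (cf g h) \<Gamma> @ map (cf g h) \<Delta> @ map (cf g h) \<Gamma>')
     (DSum (varpi C) (psubst (Var \<circ> g) (mapv h v)) x' (psubst (Var \<circ> g1) (mapv h1 t)) y' (psubst (Var \<circ> g2) (mapv h2 u))) C"
    by (rule ptypX.x_dsum[OF iv x_dsum.IH(1)[OF x_dsum.prems(1) ig(2)] IHt IHu dist])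
  then show ?case using r R(1) Q(1) unfolding h1_def g1_def h2_def g2_def by (simp only: mapv.simps psubst.simps Let_def r q prod.sel Var_comp_upd map_append)
next
  case (x_dtens v st \<Delta> A B \<Gamma> x y \<Gamma>' t C)
  let ?D = "fst ` set (\<Gamma> @ \<Gamma>')"
  have d1: "distinct (map fst (\<Gamma> @ [(x, A), (y, B)] @ \<Gamma>'))" by (rule ptypX_distinct[OF x_dtens.hyps(3)])
  have xD: "x \<notin> ?D" "y \<notin> ?D" "x \<noteq> y" using d1 by auto
  have fvt: "fv t - {x, y} = ?D" using ptypX_fv[OF x_dtens.hyps(3)] xD by auto
  obtain x' y' t' where r: "ren2 (Var \<circ> g) (h x) (h y) (mapv h t) = (x', y', t')" by (metis prod.exhaust)
  note R = ren2_ctx[OF r x_dtens.prems(1) fvt xD]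
  define h1 where "h1 = sw (h y) y' \<circ> sw (h x) x' \<circ> h"
  define g1 where "g1 = g(x' := x', y' := y')"
  have ig: "inj_on g (h ` ?D)" "inj_on g (h ` fst ` set \<Delta>)"
    using inj_sub[OF x_dtens.prems(2), of "\<Gamma> @ \<Gamma>'"] inj_sub[OF x_dtens.prems(2), of \<Delta>] by auto
  have inj1: "inj h1" unfolding h1_def using x_dtens.prems(1) sw_inj inj_compose by blast
  have hset1: "h1 ` fst ` set (\<Gamma> @ [(x, A), (y, B)] @ \<Gamma>') = insert y' (insert x' (h ` ?D))"
    using R(2,3,4) unfolding h1_def by force
  have ig0: "inj_on (g(x' := x')) (insert x' (h ` ?D))"
    by (rule inj_on_upd[OF ig(1) R(6) R(5)])
  have ig1: "inj_on g1 (h1 ` fst ` set (\<Gamma> @ [(x, A), (y, B)] @ \<Gamma>'))" unfolding hset1 g1_def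
    by (rule inj_on_upd[OF ig0]) (use R(6,7,8,9) in auto)
  have ctx1: "map (cf g1 h1) (\<Gamma> @ [(x, A), (y, B)] @ \<Gamma>') = map (cf g h) \<Gamma> @ [(x', A), (y', B)] @ map (cf g h) \<Gamma>'"
  proof -
    have "map (cf g1 h1) \<Gamma> = map (cf g h) \<Gamma>"
      by (rule bind_ctx[of _ ?D]) (use R(2,6,8) in \<open>auto simp: h1_def g1_def\<close>)
    moreover have "map (cf g1 h1) \<Gamma>' = map (cf g h) \<Gamma>'"
      by (rule bind_ctx[of _ ?D]) (use R(2,6,8) in \<open>auto simp: h1_def g1_def\<close>)
    ultimately show ?thesis using R(3,4,9) by (simp add: h1_def g1_def)
  qed
  have IHt: "ptypX st (map (cf g h) \<Gamma> @ [(x', A), (y', B)] @ map (cf g h) \<Gamma>') (psubst (Var \<circ> g1) (mapv h1 t)) C"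
    using x_dtens.IH(2)[OF inj1 ig1] unfolding ctx1 .
  have dist: "distinct (map fst (map (cf g h) \<Gamma> @ map (cf g h) \<Delta> @ map (cf g h) \<Gamma>'))"
    using distinct_cf[OF x_dtens.hyps(4) x_dtens.prems] by simp
  have iv: "isval (psubst (Var \<circ> g) (mapv h v))"
    using isval_psubst[of "Var \<circ> g"] isval_mapv x_dtens.hyps(1) by auto
  have "ptypX st (map (cf g h) \<Gamma> @ map (cf g h) \<Delta> @ map (cf g h) \<Gamma>')
     (DTens (varpi C) (psubst (Var \<circ> g) (mapv h v)) x' y' (psubst (Var \<circ> g1) (mapv h1 t))) C"
    by (rule ptypX.x_dtens[OF iv x_dtens.IH(1)[OF x_dtens.prems(1) ig(2)] IHt dist])
  then show ?case using r R(1) unfolding h1_def g1_def by (simp only: mapv.simps psubst.simps Let_def r prod.sel Var_comp_upd map_append)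
qed

lemma ptyp_True_ptypX: "ptyp True \<Gamma> t A \<Longrightarrow> ptypX True \<Gamma> t A"
proof (induction "True" \<Gamma> t A rule: ptyp.induct)
  case (t_struct \<Gamma> t A \<Gamma>' f)
  define g where "g z = (if z \<in> fst ` set \<Gamma> then f z else z)" for z
  have s: "(\<lambda>z. if z \<in> fst ` set \<Gamma> then Var (f z) else Var z) = Var \<circ> g"
    by (auto simp: g_def)
  have "distinct (map fst (map (\<lambda>(x, B). (f x, B)) \<Gamma>))"
    using distinct_mset_map[of "map (\<lambda>(x, B). (f x, B)) \<Gamma>" \<Gamma>'] t_struct.hyps(4,5) by simp
  moreover have "map fst (map (\<lambda>(x, B). (f x, B)) \<Gamma>) = map f (map fst \<Gamma>)" by (induction \<Gamma>) auto
  ultimately have "distinct (map f (map fst \<Gamma>))" by metis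
  then have "inj_on f (set (map fst \<Gamma>))" by (simp only: distinct_map)
  then have "inj_on f (fst ` set \<Gamma>)" by simp
  then have ig: "inj_on g (id ` fst ` set \<Gamma>)" unfolding inj_on_def g_def by auto
  have m: "map (cf g id) \<Gamma> = map (\<lambda>(x, B). (f x, B)) \<Gamma>"
    by (rule map_cong) (auto simp: g_def rev_image_eqI)
  have "ptypX True (map (cf g id) \<Gamma>) (psubst (Var \<circ> g) (mapv id t)) A"
    by (rule ptypX_rename[OF t_struct.hyps(3) _ ig]) simp
  then have "ptypX True (map (\<lambda>(x, B). (f x, B)) \<Gamma>) (psubst (Var \<circ> g) t) A"
    by (simp only: m mapv_id)
  then show ?case unfolding s by (rule ptypX.x_exch[OF TrueI]) (use t_struct.hyps(5) in simp)
qed (auto intro: ptypX.intros)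

lemma ptyp_eq: "ptyp st = ptypX st"
  apply (rule ext)+
  apply (cases st)
   apply (auto intro: ptyp_True_ptypX ptypX_ptyp_True simp: ptyp_False)
  done

lemma img_sub: "\<forall>z. fv (\<sigma> z) \<subseteq> {z} \<Longrightarrow> img \<sigma> S \<subseteq> S"
  unfolding img_def by auto

lemma ren1_noren: "\<forall>z. fv (\<sigma> z) \<subseteq> {z} \<Longrightarrow> ren1 \<sigma> x u = (x, u)"
  using img_sub[of \<sigma> "fv u - {x}"] unfolding ren1_def Let_def by auto

lemma ren2_noren: "\<forall>z. fv (\<sigma> z) \<subseteq> {z} \<Longrightarrow> ren2 \<sigma> x y u = (x, y, u)"
  using img_sub[of \<sigma> "fv u - {x, y}"] unfolding ren2_def Let_def by auto

lemma filt_upd: "x \<notin> fst ` set G \<Longrightarrow> filter (\<lambda>p. fst p \<notin> X - {x}) G = filter (\<lambda>p. fst p \<notin> X) G"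
  by (induction G) auto

lemma fv_upd: "\<forall>z. fv (\<sigma> z) \<subseteq> {z} \<Longrightarrow> \<forall>z. fv ((\<sigma>(x := Var x)) z) \<subseteq> {z}"
  by auto

lemma val_upd: "\<forall>z. isval (\<sigma> z) \<Longrightarrow> \<forall>z. isval ((\<sigma>(x := Var x)) z)"
  by auto

lemma var_upd: "\<forall>z. z \<notin> X \<longrightarrow> \<sigma> z = Var z \<Longrightarrow> \<forall>z. z \<notin> X - {x} \<longrightarrow> (\<sigma>(x := Var x)) z = Var z"
  by auto

lemma typ_upd: "\<forall>z C. (z, C) \<in> set G \<longrightarrow> z \<in> X \<longrightarrow> ptypX st [] (\<sigma> z) C \<Longrightarrow> set G' \<subseteq> set G \<union> {(x, A)} \<Longrightarrow>
   \<forall>z C. (z, C) \<in> set G' \<longrightarrow> z \<in> X - {x} \<longrightarrow> ptypX st [] ((\<sigma>(x := Var x)) z) C"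
  by auto

lemma typ_sub: "\<forall>z C. (z, C) \<in> set G \<longrightarrow> z \<in> X \<longrightarrow> ptypX st [] (\<sigma> z) C \<Longrightarrow> set G' \<subseteq> set G \<Longrightarrow>
   \<forall>z C. (z, C) \<in> set G' \<longrightarrow> z \<in> X \<longrightarrow> ptypX st [] (\<sigma> z) C"
  by auto

lemma distinct_filt: "distinct (map fst G) \<Longrightarrow> distinct (map fst (filter P G))"
  by (simp add: distinct_map_filter)

lemma ptypX_subst:
  "ptypX st \<Gamma> t B \<Longrightarrow> \<forall>z. isval (\<sigma> z) \<Longrightarrow> \<forall>z. fv (\<sigma> z) \<subseteq> {z} \<Longrightarrow> \<forall>z. z \<notin> X \<longrightarrow> \<sigma> z = Var z \<Longrightarrow>
   \<forall>z C. (z, C) \<in> set \<Gamma> \<longrightarrow> z \<in> X \<longrightarrow> ptypX st [] (\<sigma> z) C \<Longrightarrow>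
   ptypX st (filter (\<lambda>p. fst p \<notin> X) \<Gamma>) (psubst \<sigma> t) B"
proof (induction arbitrary: \<sigma> X rule: ptypX.induct)
  case (x_var st x A)
  then show ?case by (cases "x \<in> X") (auto intro: ptypX.x_var)
next
  case (x_exch st \<Gamma> t A \<Gamma>')
  have "set \<Gamma>' = set \<Gamma>" using x_exch.hyps(3) by (metis mset_eq_setD)
  then have "ptypX st (filter (\<lambda>p. fst p \<notin> X) \<Gamma>) (psubst \<sigma> t) A" using x_exch.IH x_exch.prems by simp
  then show ?case by (rule ptypX.x_exch[OF x_exch.hyps(1)]) (use x_exch.hyps in simp)
next
  case (x_let st \<Delta> t A \<Gamma> x u B)
  have d: "distinct (map fst (\<Gamma> @ [(x, A)]))" by (rule ptypX_distinct[OF x_let.hyps(2)])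
  then have xD: "x \<notin> fst ` set \<Gamma>" by auto
  have T: "\<forall>z C. (z, C) \<in> set (\<Gamma> @ [(x, A)]) \<longrightarrow> z \<in> X - {x} \<longrightarrow> ptypX st [] ((\<sigma>(x := Var x)) z) C"
    using x_let.prems(4) by auto
  have F: "filter (\<lambda>p. fst p \<notin> X - {x}) (\<Gamma> @ [(x, A)]) = filter (\<lambda>p. fst p \<notin> X) \<Gamma> @ [(x, A)]"
    using filt_upd[OF xD] by simp
  have IHu: "ptypX st (filter (\<lambda>p. fst p \<notin> X) \<Gamma> @ [(x, A)]) (psubst (\<sigma>(x := Var x)) u) B"
    using x_let.IH(2)[OF val_upd[OF x_let.prems(1)] fv_upd[OF x_let.prems(2)] var_upd[OF x_let.prems(3)] T]
    unfolding F .
  have IHt: "ptypX st (filter (\<lambda>p. fst p \<notin> X) \<Delta>) (psubst \<sigma> t) A"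
    using x_let.IH(1)[OF x_let.prems(1-3) typ_sub[OF x_let.prems(4)]] by auto
  have dist: "distinct (map fst (filter (\<lambda>p. fst p \<notin> X) \<Gamma> @ filter (\<lambda>p. fst p \<notin> X) \<Delta>))"
    using distinct_filt[OF x_let.hyps(3)] by simp
  show ?case using ptypX.x_let[OF IHt IHu dist] ren1_noren[OF x_let.prems(2)] by (simp add: Let_def)
next
  case (x_lam st x A \<Gamma> t B)
  have d: "distinct (map fst ((x, A) # \<Gamma>))" by (rule ptypX_distinct[OF x_lam.hyps(1)])
  then have xD: "x \<notin> fst ` set \<Gamma>" by auto
  have T: "\<forall>z C. (z, C) \<in> set ((x, A) # \<Gamma>) \<longrightarrow> z \<in> X - {x} \<longrightarrow> ptypX st [] ((\<sigma>(x := Var x)) z) C"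
    using x_lam.prems(4) by auto
  have F: "filter (\<lambda>p. fst p \<notin> X - {x}) ((x, A) # \<Gamma>) = (x, A) # filter (\<lambda>p. fst p \<notin> X) \<Gamma>"
    using filt_upd[OF xD] by simp
  have IHu: "ptypX st ((x, A) # filter (\<lambda>p. fst p \<notin> X) \<Gamma>) (psubst (\<sigma>(x := Var x)) t) B"
    using x_lam.IH[OF val_upd[OF x_lam.prems(1)] fv_upd[OF x_lam.prems(2)] var_upd[OF x_lam.prems(3)] T]
    unfolding F .
  show ?case using ptypX.x_lam[OF IHu] ren1_noren[OF x_lam.prems(2)] by (simp add: Let_def)
next
  case (x_pair v w st \<Gamma> A \<Delta> B)
  have dist: "distinct (map fst (filter (\<lambda>p. fst p \<notin> X) \<Gamma> @ filter (\<lambda>p. fst p \<notin> X) \<Delta>))"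
    using distinct_filt[OF x_pair.hyps(5)] by simp
  have iv: "isval (psubst \<sigma> v)" "isval (psubst \<sigma> w)"
    using isval_psubst[OF x_pair.prems(1)] x_pair.hyps(1,2) by auto
  show ?case using ptypX.x_pair[OF iv x_pair.IH(1)[OF x_pair.prems(1-3) typ_sub[OF x_pair.prems(4)]]
     x_pair.IH(2)[OF x_pair.prems(1-3) typ_sub[OF x_pair.prems(4)]] dist] by simp
next
  case (x_app w v st \<Gamma> A \<Delta> B)
  have dist: "distinct (map fst (filter (\<lambda>p. fst p \<notin> X) \<Gamma> @ filter (\<lambda>p. fst p \<notin> X) \<Delta>))"
    using distinct_filt[OF x_app.hyps(5)] by simp
  have iv: "isval (psubst \<sigma> w)" "isval (psubst \<sigma> v)"
    using isval_psubst[OF x_app.prems(1)] x_app.hyps(1,2) by auto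
  show ?case using ptypX.x_app[OF iv x_app.IH(1)[OF x_app.prems(1-3) typ_sub[OF x_app.prems(4)]]
     x_app.IH(2)[OF x_app.prems(1-3) typ_sub[OF x_app.prems(4)]] dist] by simp
next
  case (x_inj1 v st \<Gamma> A B)
  have iv: "isval (psubst \<sigma> v)" using isval_psubst[OF x_inj1.prems(1)] x_inj1.hyps(1) by auto
  show ?case using ptypX.x_inj1[OF iv x_inj1.IH[OF x_inj1.prems]] by simp
next
  case (x_inj2 v st \<Gamma> B A)
  have iv: "isval (psubst \<sigma> v)" using isval_psubst[OF x_inj2.prems(1)] x_inj2.hyps(1) by auto
  show ?case using ptypX.x_inj2[OF iv x_inj2.IH[OF x_inj2.prems]] by simp
next
  case (x_prj1 v st \<Gamma> A1 A2)
  have iv: "isval (psubst \<sigma> v)" using isval_psubst[OF x_prj1.prems(1)] x_prj1.hyps(1) by auto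
  show ?case using ptypX.x_prj1[OF iv x_prj1.IH[OF x_prj1.prems]] by simp
next
  case (x_prj2 v st \<Gamma> A1 A2)
  have iv: "isval (psubst \<sigma> v)" using isval_psubst[OF x_prj2.prems(1)] x_prj2.hyps(1) by auto
  show ?case using ptypX.x_prj2[OF iv x_prj2.IH[OF x_prj2.prems]] by simp
next
  case (x_wth st \<Gamma> t A u B)
  show ?case using ptypX.x_wth[OF x_wth.IH(1)[OF x_wth.prems] x_wth.IH(2)[OF x_wth.prems]] by simp
next
  case (x_done v st \<Delta> \<Gamma> \<Gamma>' t A)
  have dist: "distinct (map fst (filter (\<lambda>p. fst p \<notin> X) \<Gamma> @ filter (\<lambda>p. fst p \<notin> X) \<Delta> @ filter (\<lambda>p. fst p \<notin> X) \<Gamma>'))"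
    using distinct_filt[OF x_done.hyps(4)] by simp
  have iv: "isval (psubst \<sigma> v)" using isval_psubst[OF x_done.prems(1)] x_done.hyps(1) by auto
  have IHt: "ptypX st (filter (\<lambda>p. fst p \<notin> X) \<Gamma> @ filter (\<lambda>p. fst p \<notin> X) \<Gamma>') (psubst \<sigma> t) A"
    using x_done.IH(2)[OF x_done.prems(1-3) typ_sub[OF x_done.prems(4)]] by auto
  show ?case using ptypX.x_done[OF iv x_done.IH(1)[OF x_done.prems(1-3) typ_sub[OF x_done.prems(4)]] IHt dist]
    by auto
next
  case (x_dsum v st \<Delta> A B \<Gamma> x \<Gamma>' t C y u)
  have d1: "distinct (map fst (\<Gamma> @ [(x, A)] @ \<Gamma>'))" by (rule ptypX_distinct[OF x_dsum.hyps(3)])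
  have d2: "distinct (map fst (\<Gamma> @ [(y, B)] @ \<Gamma>'))" by (rule ptypX_distinct[OF x_dsum.hyps(4)])
  have xD: "x \<notin> fst ` set \<Gamma>" "x \<notin> fst ` set \<Gamma>'" "y \<notin> fst ` set \<Gamma>" "y \<notin> fst ` set \<Gamma>'" using d1 d2 by auto
  have T1: "\<forall>z D. (z, D) \<in> set (\<Gamma> @ [(x, A)] @ \<Gamma>') \<longrightarrow> z \<in> X - {x} \<longrightarrow> ptypX st [] ((\<sigma>(x := Var x)) z) D"
    using x_dsum.prems(4) by auto
  have T2: "\<forall>z D. (z, D) \<in> set (\<Gamma> @ [(y, B)] @ \<Gamma>') \<longrightarrow> z \<in> X - {y} \<longrightarrow> ptypX st [] ((\<sigma>(y := Var y)) z) D"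
    using x_dsum.prems(4) by auto
  have F1: "filter (\<lambda>p. fst p \<notin> X - {x}) (\<Gamma> @ [(x, A)] @ \<Gamma>') = filter (\<lambda>p. fst p \<notin> X) \<Gamma> @ [(x, A)] @ filter (\<lambda>p. fst p \<notin> X) \<Gamma>'"
    using filt_upd[OF xD(1)] filt_upd[OF xD(2)] by simp
  have F2: "filter (\<lambda>p. fst p \<notin> X - {y}) (\<Gamma> @ [(y, B)] @ \<Gamma>') = filter (\<lambda>p. fst p \<notin> X) \<Gamma> @ [(y, B)] @ filter (\<lambda>p. fst p \<notin> X) \<Gamma>'"
    using filt_upd[OF xD(3)] filt_upd[OF xD(4)] by simp
  have IHt: "ptypX st (filter (\<lambda>p. fst p \<notin> X) \<Gamma> @ [(x, A)] @ filter (\<lambda>p. fst p \<notin> X) \<Gamma>') (psubst (\<sigma>(x := Var x)) t) C"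
    using x_dsum.IH(2)[OF val_upd[OF x_dsum.prems(1)] fv_upd[OF x_dsum.prems(2)] var_upd[OF x_dsum.prems(3)] T1]
    unfolding F1 .
  have IHu: "ptypX st (filter (\<lambda>p. fst p \<notin> X) \<Gamma> @ [(y, B)] @ filter (\<lambda>p. fst p \<notin> X) \<Gamma>') (psubst (\<sigma>(y := Var y)) u) C"
    using x_dsum.IH(3)[OF val_upd[OF x_dsum.prems(1)] fv_upd[OF x_dsum.prems(2)] var_upd[OF x_dsum.prems(3)] T2]
    unfolding F2 .
have dist: "distinct (map fst (filter (\<lambda>p. fst p \<notin> X) \<Gamma> @ filter (\<lambda>p. fst p \<notin> X) \<Delta> @ filter (\<lambda>p. fst p \<notin> X) \<Gamma>'))"
    using distinct_filt[OF x_dsum.hyps(5)] by simp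
  have iv: "isval (psubst \<sigma> v)" using isval_psubst[OF x_dsum.prems(1)] x_dsum.hyps(1) by auto
  show ?case using ptypX.x_dsum[OF iv x_dsum.IH(1)[OF x_dsum.prems(1-3) typ_sub[OF x_dsum.prems(4)]] IHt IHu dist]
    ren1_noren[OF x_dsum.prems(2)] by (auto simp: Let_def)
next
  case (x_dtens v st \<Delta> A B \<Gamma> x y \<Gamma>' t C)
  have d1: "distinct (map fst (\<Gamma> @ [(x, A), (y, B)] @ \<Gamma>'))" by (rule ptypX_distinct[OF x_dtens.hyps(3)])
  have xD: "x \<notin> fst ` set \<Gamma>" "x \<notin> fst ` set \<Gamma>'" "y \<notin> fst ` set \<Gamma>" "y \<notin> fst ` set \<Gamma>'" using d1 by auto
  have T: "\<forall>z D. (z, D) \<in> set (\<Gamma> @ [(x, A), (y, B)] @ \<Gamma>') \<longrightarrow> z \<in> X - {x} - {y} \<longrightarrow> ptypX st [] ((\<sigma>(x := Var x, y := Var y)) z) D"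
    using x_dtens.prems(4) by auto
  have F: "filter (\<lambda>p. fst p \<notin> X - {x} - {y}) (\<Gamma> @ [(x, A), (y, B)] @ \<Gamma>') = filter (\<lambda>p. fst p \<notin> X) \<Gamma> @ [(x, A), (y, B)] @ filter (\<lambda>p. fst p \<notin> X) \<Gamma>'"
    using filt_upd[OF xD(1), of X] filt_upd[OF xD(2), of X] filt_upd[OF xD(3), of "X - {x}"] filt_upd[OF xD(4), of "X - {x}"] by simp
  have IHt: "ptypX st (filter (\<lambda>p. fst p \<notin> X) \<Gamma> @ [(x, A), (y, B)] @ filter (\<lambda>p. fst p \<notin> X) \<Gamma>') (psubst (\<sigma>(x := Var x, y := Var y)) t) C"
    using x_dtens.IH(2)[OF val_upd[OF val_upd[OF x_dtens.prems(1)]] fv_upd[OF fv_upd[OF x_dtens.prems(2)]]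
      var_upd[OF var_upd[OF x_dtens.prems(3)]] T]
    unfolding F .
  have dist: "distinct (map fst (filter (\<lambda>p. fst p \<notin> X) \<Gamma> @ filter (\<lambda>p. fst p \<notin> X) \<Delta> @ filter (\<lambda>p. fst p \<notin> X) \<Gamma>'))"
    using distinct_filt[OF x_dtens.hyps(4)] by simp
  have iv: "isval (psubst \<sigma> v)" using isval_psubst[OF x_dtens.prems(1)] x_dtens.hyps(1) by auto
  show ?case using ptypX.x_dtens[OF iv x_dtens.IH(1)[OF x_dtens.prems(1-3) typ_sub[OF x_dtens.prems(4)]] IHt dist]
    ren2_noren[OF x_dtens.prems(2)] by (auto simp: Let_def)
qed (auto intro: ptypX.intros)

lemma mset_nil: "mset G' = mset G \<Longrightarrow> G' = [] \<Longrightarrow> G = []"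
  by simp

lemma subst1_typ: "ptypX st [(x, A)] t B \<Longrightarrow> ptypX st [] v A \<Longrightarrow> isval v \<Longrightarrow> ptypX st [] (subst1 v x t) B"
  unfolding subst1_def
  using ptypX_subst[of st "[(x, A)]" t B "Var(x := v)" "{x}"] ptypX_fv[of st "[]" v A] by auto

lemma subst2_typ: "ptypX st [(x, A), (y, B)] t C \<Longrightarrow> ptypX st [] v A \<Longrightarrow> ptypX st [] w B \<Longrightarrow> isval v \<Longrightarrow> isval w \<Longrightarrow>
  ptypX st [] (subst2 v x w y t) C"
  unfolding subst2_def
  using ptypX_subst[of st "[(x, A), (y, B)]" t C "Var(x := v, y := w)" "{x, y}"] ptypX_fv[of st "[]" v A]
    ptypX_fv[of st "[]" w B] ptypX_distinct[of st "[(x, A), (y, B)]" t C] by auto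

lemma inv_let: "ptypX st \<Gamma> T B \<Longrightarrow> \<Gamma> = [] \<Longrightarrow> T = Let p e x t u \<Longrightarrow>
  \<exists>A. p = varpi A \<and> e = varpi B \<and> ptypX st [] t A \<and> ptypX st [(x, A)] u B"
  by (induction rule: ptypX.induct) auto

lemma inv_app: "ptypX st \<Gamma> T B \<Longrightarrow> \<Gamma> = [] \<Longrightarrow> T = App e v w \<Longrightarrow>
  \<exists>A. e = varpi B \<and> isval w \<and> ptypX st [] w A \<and> ptypX st [] v (TLolli A B)"
  by (induction rule: ptypX.induct) auto

lemma inv_lam: "ptypX st \<Gamma> T C \<Longrightarrow> \<Gamma> = [] \<Longrightarrow> T = Lam x t \<Longrightarrow>
  \<exists>A B. C = TLolli A B \<and> ptypX st [(x, A)] t B"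
  by (induction rule: ptypX.induct) auto

lemma inv_prj1: "ptypX st \<Gamma> T C \<Longrightarrow> \<Gamma> = [] \<Longrightarrow> T = Prj1 e v \<Longrightarrow>
  \<exists>A2. e = varpi C \<and> ptypX st [] v (TWith C A2)"
  by (induction rule: ptypX.induct) auto

lemma inv_prj2: "ptypX st \<Gamma> T C \<Longrightarrow> \<Gamma> = [] \<Longrightarrow> T = Prj2 e v \<Longrightarrow>
  \<exists>A1. e = varpi C \<and> ptypX st [] v (TWith A1 C)"
  by (induction rule: ptypX.induct) auto

lemma inv_wth: "ptypX st \<Gamma> T C \<Longrightarrow> \<Gamma> = [] \<Longrightarrow> T = Wth t1 t2 \<Longrightarrow>
  \<exists>A1 A2. C = TWith A1 A2 \<and> ptypX st [] t1 A1 \<and> ptypX st [] t2 A2"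
  by (induction rule: ptypX.induct) auto

lemma inv_dtens: "ptypX st \<Gamma> T C \<Longrightarrow> \<Gamma> = [] \<Longrightarrow> T = DTens e v x y t \<Longrightarrow>
  \<exists>A B. e = varpi C \<and> ptypX st [] v (TTensor A B) \<and> ptypX st [(x, A), (y, B)] t C"
  by (induction rule: ptypX.induct) auto

lemma inv_pair: "ptypX st \<Gamma> T C \<Longrightarrow> \<Gamma> = [] \<Longrightarrow> T = Pair v w \<Longrightarrow>
  \<exists>A B. C = TTensor A B \<and> isval v \<and> isval w \<and> ptypX st [] v A \<and> ptypX st [] w B"
  by (induction rule: ptypX.induct) auto

lemma inv_done: "ptypX st \<Gamma> T C \<Longrightarrow> \<Gamma> = [] \<Longrightarrow> T = DOne e v t \<Longrightarrow>
  e = varpi C \<and> ptypX st [] t C"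
  by (induction rule: ptypX.induct) auto

lemma inv_dsum: "ptypX st \<Gamma> T C \<Longrightarrow> \<Gamma> = [] \<Longrightarrow> T = DSum e v x1 t1 x2 t2 \<Longrightarrow>
  \<exists>A B. e = varpi C \<and> ptypX st [] v (TPlus A B) \<and> ptypX st [(x1, A)] t1 C \<and> ptypX st [(x2, B)] t2 C"
  by (induction rule: ptypX.induct) auto

lemma inv_inj1: "ptypX st \<Gamma> T C \<Longrightarrow> \<Gamma> = [] \<Longrightarrow> T = Inj1 v \<Longrightarrow>
  \<exists>A B. C = TPlus A B \<and> isval v \<and> ptypX st [] v A"
  by (induction rule: ptypX.induct) auto

lemma inv_inj2: "ptypX st \<Gamma> T C \<Longrightarrow> \<Gamma> = [] \<Longrightarrow> T = Inj2 v \<Longrightarrow>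
  \<exists>A B. C = TPlus A B \<and> isval v \<and> ptypX st [] v B"
  by (induction rule: ptypX.induct) auto

lemma inv_new: "ptypX st \<Gamma> T C \<Longrightarrow> T = New \<Longrightarrow> C = TLolli TOne (TPlus TR TOne)"
  by (induction rule: ptypX.induct) auto

lemma inv_delete: "ptypX st \<Gamma> T C \<Longrightarrow> T = Delete \<Longrightarrow> C = TLolli TR TOne"
  by (induction rule: ptypX.induct) auto

lemma inv_unit: "ptypX st \<Gamma> T C \<Longrightarrow> T = Unit \<Longrightarrow> C = TOne"
  by (induction rule: ptypX.induct) auto

lemma inv_res: "ptypX st \<Gamma> T C \<Longrightarrow> T = Res n \<Longrightarrow> C = TR"
  by (induction rule: ptypX.induct) auto

lemma styp_arg: "styp st (FArg e v # s) T C \<Longrightarrow> \<exists>A B. T = TLolli A B \<and> styp st s B C \<and> e = varpi B \<and> isval v \<and> ptypX st [] v A"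
  by (erule styp.cases) (auto simp: ptyp_eq)

lemma styp_let: "styp st (FLet e x t # s) T C \<Longrightarrow> \<exists>B. styp st s B C \<and> e = varpi B \<and> ptypX st [(x, T)] t B"
  by (erule styp.cases) (auto simp: ptyp_eq)

lemma styp_prj1: "styp st (FPrj1 e # s) T C \<Longrightarrow> \<exists>A1 A2. T = TWith A1 A2 \<and> styp st s A1 C \<and> e = varpi A1"
  by (erule styp.cases) auto

lemma styp_prj2: "styp st (FPrj2 e # s) T C \<Longrightarrow> \<exists>A1 A2. T = TWith A1 A2 \<and> styp st s A2 C \<and> e = varpi A2"
  by (erule styp.cases) auto

lemma pres:
  assumes c: "ctyp st c1 A" and r: "red c1 c2"
  shows "ctyp st c2 A"
  using r
proof cases
  case (r_letn e x v t s l)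
  then obtain B where B: "varpi B = e" "ptypX st [] (Let Neg e x v t) B" "styp st s B A"
    using c by (auto simp: ctyp_def ptyp_eq)
  then obtain A' where "Neg = varpi A'" "ptypX st [] v A'" "ptypX st [(x, A')] t B"
    using inv_let[OF B(2)] by blast
  moreover have "isval v" using ptypX_isval[OF \<open>ptypX st [] v A'\<close>] \<open>Neg = varpi A'\<close> by simp
  ultimately show ?thesis using B r_letn subst1_typ by (auto simp: ctyp_def ptyp_eq)
next
  case (r_letp e x t u s l)
  then obtain B where B: "varpi B = e" "ptypX st [] (Let Pos e x t u) B" "styp st s B A"
    using c by (auto simp: ctyp_def ptyp_eq)
  then obtain A' where A': "Pos = varpi A'" "ptypX st [] t A'" "ptypX st [(x, A')] u B"
    using inv_let[OF B(2)] by blast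
  have "styp st (FLet e x u # s) A' A" by (rule s_let[OF B(3)]) (use B A' in \<open>auto simp: ptyp_eq\<close>)
  then show ?thesis using A' r_letp by (auto simp: ctyp_def ptyp_eq intro!: exI[of _ A'])
next
  case (r_pop v e x t s l)
  then obtain B where B: "varpi B = Pos" "ptypX st [] v B" "styp st (FLet e x t # s) B A"
    using c by (auto simp: ctyp_def ptyp_eq)
  then obtain B' where "styp st s B' A" "e = varpi B'" "ptypX st [(x, B)] t B'"
    using styp_let by blast
  then show ?thesis using r_pop B subst1_typ by (auto simp: ctyp_def ptyp_eq)
next
  case (r_app e v w s l)
  then obtain B where B: "varpi B = e" "ptypX st [] (App e v w) B" "styp st s B A"
    using c by (auto simp: ctyp_def ptyp_eq)
  then obtain A' where A': "isval w" "ptypX st [] w A'" "ptypX st [] v (TLolli A' B)"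
    using inv_app[OF B(2)] by blast
  have "styp st (FArg e w # s) (TLolli A' B) A" by (rule s_arg[OF B(3)]) (use B A' in \<open>auto simp: ptyp_eq\<close>)
  then show ?thesis using A' r_app by (auto simp: ctyp_def ptyp_eq intro!: exI[of _ "TLolli A' B"])
next
  case (r_lam x t e v s l)
  then obtain B where B: "ptypX st [] (Lam x t) B" "styp st (FArg e v # s) B A"
    using c by (auto simp: ctyp_def ptyp_eq)
  then obtain A1 B1 where "B = TLolli A1 B1" "ptypX st [(x, A1)] t B1"
    using inv_lam[OF B(1)] by blast
  moreover obtain A2 B2 where "B = TLolli A2 B2" "styp st s B2 A" "e = varpi B2" "isval v" "ptypX st [] v A2"
    using styp_arg[OF B(2)] by blast
  ultimately show ?thesis using r_lam subst1_typ by (auto simp: ctyp_def ptyp_eq)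
next
  case (r_prj1 e v s l)
  then obtain B where B: "varpi B = e" "ptypX st [] (Prj1 e v) B" "styp st s B A"
    using c by (auto simp: ctyp_def ptyp_eq)
  then obtain A2 where A': "ptypX st [] v (TWith B A2)"
    using inv_prj1[OF B(2)] by blast
  have "styp st (FPrj1 e # s) (TWith B A2) A" by (rule s_prj1[OF B(3)]) (use B in simp)
  then show ?thesis using A' r_prj1 by (auto simp: ctyp_def ptyp_eq intro!: exI[of _ "TWith B A2"])
next
  case (r_prj2 e v s l)
  then obtain B where B: "varpi B = e" "ptypX st [] (Prj2 e v) B" "styp st s B A"
    using c by (auto simp: ctyp_def ptyp_eq)
  then obtain A1 where A': "ptypX st [] v (TWith A1 B)"
    using inv_prj2[OF B(2)] by blast
  have "styp st (FPrj2 e # s) (TWith A1 B) A" by (rule s_prj2[OF B(3)]) (use B in simp)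
  then show ?thesis using A' r_prj2 by (auto simp: ctyp_def ptyp_eq intro!: exI[of _ "TWith A1 B"])
next
  case (r_wth1 t1 t2 e s l)
  then obtain B where B: "ptypX st [] (Wth t1 t2) B" "styp st (FPrj1 e # s) B A"
    using c by (auto simp: ctyp_def ptyp_eq)
  then obtain A1 A2 where "B = TWith A1 A2" "ptypX st [] t1 A1" using inv_wth[OF B(1)] by blast
  moreover obtain C1 C2 where "B = TWith C1 C2" "styp st s C1 A" "e = varpi C1" using styp_prj1[OF B(2)] by blast
  ultimately show ?thesis using r_wth1 by (auto simp: ctyp_def ptyp_eq)
next
  case (r_wth2 t1 t2 e s l)
  then obtain B where B: "ptypX st [] (Wth t1 t2) B" "styp st (FPrj2 e # s) B A"
    using c by (auto simp: ctyp_def ptyp_eq)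
  then obtain A1 A2 where "B = TWith A1 A2" "ptypX st [] t2 A2" using inv_wth[OF B(1)] by blast
  moreover obtain C1 C2 where "B = TWith C1 C2" "styp st s C2 A" "e = varpi C2" using styp_prj2[OF B(2)] by blast
  ultimately show ?thesis using r_wth2 by (auto simp: ctyp_def ptyp_eq)
next
  case (r_dtens e v w x y t s l)
  then obtain B where B: "varpi B = e" "ptypX st [] (DTens e (Pair v w) x y t) B" "styp st s B A"
    using c by (auto simp: ctyp_def ptyp_eq)
  then obtain A1 A2 where A': "ptypX st [] (Pair v w) (TTensor A1 A2)" "ptypX st [(x, A1), (y, A2)] t B"
    using inv_dtens[OF B(2)] by blast
  then obtain C1 C2 where "TTensor A1 A2 = TTensor C1 C2" "isval v" "isval w" "ptypX st [] v C1" "ptypX st [] w C2"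
    using inv_pair[OF A'(1)] by blast
  then show ?thesis using A' B r_dtens subst2_typ by (auto simp: ctyp_def ptyp_eq)
next
  case (r_done e t s l)
  then obtain B where B: "varpi B = e" "ptypX st [] (DOne e Unit t) B" "styp st s B A"
    using c by (auto simp: ctyp_def ptyp_eq)
  then show ?thesis using inv_done[OF B(2)] r_done by (auto simp: ctyp_def ptyp_eq)
next
  case (r_dsum1 e v x1 t1 x2 t2 s l)
  then obtain B where B: "varpi B = e" "ptypX st [] (DSum e (Inj1 v) x1 t1 x2 t2) B" "styp st s B A"
    using c by (auto simp: ctyp_def ptyp_eq)
  then obtain A1 A2 where A': "ptypX st [] (Inj1 v) (TPlus A1 A2)" "ptypX st [(x1, A1)] t1 B"
    using inv_dsum[OF B(2)] by blast
  then obtain C1 C2 where "TPlus A1 A2 = TPlus C1 C2" "isval v" "ptypX st [] v C1"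
    using inv_inj1[OF A'(1)] by blast
  then show ?thesis using A' B r_dsum1 subst1_typ by (auto simp: ctyp_def ptyp_eq)
next
  case (r_dsum2 e v x1 t1 x2 t2 s l)
  then obtain B where B: "varpi B = e" "ptypX st [] (DSum e (Inj2 v) x1 t1 x2 t2) B" "styp st s B A"
    using c by (auto simp: ctyp_def ptyp_eq)
  then obtain A1 A2 where A': "ptypX st [] (Inj2 v) (TPlus A1 A2)" "ptypX st [(x2, A2)] t2 B"
    using inv_dsum[OF B(2)] by blast
  then obtain C1 C2 where "TPlus A1 A2 = TPlus C1 C2" "isval v" "ptypX st [] v C2"
    using inv_inj2[OF A'(1)] by blast
  then show ?thesis using A' B r_dsum2 subst1_typ by (auto simp: ctyp_def ptyp_eq)
next
  case (r_new1 e s n l)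
  then obtain B where B: "ptypX st [] New B" "styp st (FArg e Unit # s) B A"
    using c by (auto simp: ctyp_def ptyp_eq)
  then have "B = TLolli TOne (TPlus TR TOne)" using inv_new by blast
  then have "styp st s (TPlus TR TOne) A" using styp_arg[OF B(2)] by auto
  moreover have "ptypX st [] (Inj1 (Res n)) (TPlus TR TOne)" by (auto intro: ptypX.intros)
  ultimately show ?thesis using r_new1 by (auto simp: ctyp_def ptyp_eq intro!: exI[of _ "TPlus TR TOne"])
next
  case (r_new2 e s)
  then obtain B where B: "ptypX st [] New B" "styp st (FArg e Unit # s) B A"
    using c by (auto simp: ctyp_def ptyp_eq)
  then have "B = TLolli TOne (TPlus TR TOne)" using inv_new by blast
  then have "styp st s (TPlus TR TOne) A" using styp_arg[OF B(2)] by auto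
  moreover have "ptypX st [] (Inj2 Unit) (TPlus TR TOne)" by (auto intro: ptypX.intros)
  ultimately show ?thesis using r_new2 by (auto simp: ctyp_def ptyp_eq intro!: exI[of _ "TPlus TR TOne"])
next
  case (r_delete e n s l)
  then obtain B where B: "ptypX st [] Delete B" "styp st (FArg e (Res n) # s) B A"
    using c by (auto simp: ctyp_def ptyp_eq)
  then have "B = TLolli TR TOne" using inv_delete by blast
  then have "styp st s TOne A" using styp_arg[OF B(2)] by auto
  moreover have "ptypX st [] Unit TOne" by (auto intro: ptypX.intros)
  ultimately show ?thesis using r_delete by (auto simp: ctyp_def ptyp_eq intro!: exI[of _ TOne])
qed

theorem theorem2:
  shows "(\<forall>A c1 c2. ctyp True c1 A \<and> red c1 c2 \<longrightarrow> ctyp True c2 A) \<and>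
         (\<forall>A c1 c2. ctyp False c1 A \<and> red c1 c2 \<longrightarrow> ctyp False c2 A)"
  using pres by blast

end
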